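(* Let $(X,\mathcal{H},\lambda)$ be a homogenizer and $1\le p<+\infty$. The mean value $M$ on $(X,\mathcal{H},\lambda)$ extends uniquely to a continuous linear form (still denoted $M$) on $\mathfrak{X}^p(X,\mathcal{H},\lambda)$. Moreover, for every $u\in\mathfrak{X}^p(X,\mathcal{H},\lambda)$ and every relatively compact open set $\Omega\subset X$, $u\circ H_\varepsilon\to M(u)$ (the constant function) weakly in $L^p(\Omega)$ as $\varepsilon\to\theta$, where $u\circ H_\varepsilon$ is restricted to $\Omega$.
   Context: An $\mathbb{R}$-group is an abelian group $E$ (operation written multiplicatively) whose underlying set is a subset of $\mathbb{R}$ containing all positive integers, such that: (RG1) with the natural order of $\mathbb{R}$, $E$ is a totally ordered group; (RG2) with the topology induced from $\mathbb{R}$, $E$ is a locally compact group; (RG3) there is a nonconstant continuous homomorphism $h:E\to\mathbb{R}_+^*$ such that for every $\alpha\in E$ the set $\{\varepsilon\in E:\varepsilon\ge\alpha\}$ is integrable for $h\cdot m$, $m$ a Haar measure on $E$. $e$ is the identity of $E$, $\varepsilon^{-1}$ the group inverse, $\theta=\inf E\in\mathbb{R}\cup\{\pm\infty\}$; inequalities refer to the order of $\mathbb{R}$. An action of $E$ on $X$ is a family $(H_\varepsilon)_{\varepsilon\in E}$ of bijections of $X$ with $H_\varepsilon\circ H_{\varepsilon'}=H_{\varepsilon\varepsilon'}$, $H_e=\mathrm{id}_X$; continuous if $(\varepsilon,x)\mapsto H_\varepsilon(x)$ is continuous on $E\times X$; absorptive if some $\omega\in X$ satisfies: for every neighbourhood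 $V$ of $\omega$ and every $x\in X$ there are a neighbourhood $U$ of $x$ and $\alpha\in E$ with $H_{\varepsilon^{-1}}(U)\subset V$ for all $\varepsilon\le\alpha$; this $\omega$ is unique, the center. A set $T$ is balanced if $H_{\varepsilon^{-1}}(T)\subset T$ for all $\varepsilon\le e$; elementary if it is a balanced relatively compact neighbourhood of $\omega$. A positive Radon measure $\lambda$ is $\mathcal{H}$-homogeneous if for each $\varepsilon$ there is $c(\varepsilon)>0$ with $\int\varphi(H_\varepsilon(x))d\lambda(x)=c(\varepsilon)\int\varphi\,d\lambda$ for all $\varphi\in\mathcal{K}(X)$; it is nontrivial if $\lambda\ne0$, $\lambda\ne\delta_\omega$. A homogenizer is a triple $(X,\mathcal{H},\lambda)$ with $X$ a noncompact locally compact space in which each point has a countable neighbourhood base, $\mathcal{H}$ a continuous absorptive action of an $\mathbb{R}$-group $E$ on $X$, $\lambda$ a nontrivial $\mathcal{H}$-homogeneous positive Radon measure; $X$ is equipped with $\lambda$. $\mathcal{B}(X)$ is the Banach space of bounded continuous complex functions with the sup norm. $\Pi^\infty(X,\mathcal{H},\lambda)$ is the space of $u\in\mathcal{B}(X)$ for which there is a constant $\tilde u\in\mathbb{C}$ with $u\circ H_\varepsilon\to\tilde u$ weak-$*$ in $L^\infty(X)$ as $\varepsilon\to\theta$; the mean value is $M:\Pi^\infty(X,\mathcal{H},\lambda)\to\mathbb{C}$, $M(u)=\tilde u$. $\Xi^p(X,\mathcal{H},\lambda)$ is the space of $u\in L^p_{loc}(X)$ with $\sup_{\varepsilon\le e}\int_K|u\circ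 H_\varepsilon|^pd\lambda<\infty$ for all compact $K$, normed (as a Banach space) by $\|u\|_{\Xi^p}=\sup_{\varepsilon\le e}(\int_B|u(H_\varepsilon(x))|^pd\lambda(x))^{1/p}$, $B$ a fixed open elementary set. $\mathfrak{X}^p(X,\mathcal{H},\lambda)$ is the closure of $\Pi^\infty(X,\mathcal{H},\lambda)$ in $\Xi^p(X,\mathcal{H},\lambda)$. *)

theory Defs
  imports "HOL-Analysis.Analysis"
begin

definition haar_measure_on ::
  "real set \<Rightarrow> (real \<Rightarrow> real \<Rightarrow> real) \<Rightarrow> real measure \<Rightarrow> bool" where
  "haar_measure_on E gmul m \<longleftrightarrow>
     space m = E \<and> sets m = sets (restrict_space borel E) \<and>
     (\<forall>K. K \<subseteq> E \<and> compact K \<longrightarrow> emeasure m K < \<infinity>) \<and>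
     (\<exists>A\<in>sets m. emeasure m A \<noteq> 0) \<and>
     (\<forall>a\<in>E. \<forall>A\<in>sets m. emeasure m ((\<lambda>x. gmul a x) ` A) = emeasure m A)"

definition R_group ::
  "real set \<Rightarrow> (real \<Rightarrow> real \<Rightarrow> real) \<Rightarrow> real \<Rightarrow> (real \<Rightarrow> real) \<Rightarrow> bool" where
  "R_group E gmul e iv \<longleftrightarrow>
     \<comment> \<open>abelian group\<close>
     (\<forall>x\<in>E. \<forall>y\<in>E. gmul x y \<in> E) \<and> e \<in> E \<and> (\<forall>x\<in>E. iv x \<in> E) \<and>
     (\<forall>x\<in>E. \<forall>y\<in>E. \<forall>z\<in>E. gmul (gmul x y) z = gmul x (gmul y z)) \<and>
     (\<forall>x\<in>E. \<forall>y\<in>E. gmul x y = gmul y x) \<and>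
     (\<forall>x\<in>E. gmul e x = x) \<and> (\<forall>x\<in>E. gmul (iv x) x = e) \<and>
     \<comment> \<open>contains all positive integers\<close>
     (\<forall>n::nat. 1 \<le> n \<longrightarrow> real n \<in> E) \<and>
     \<comment> \<open>(RG1) totally ordered group for the natural order of R\<close>
     (\<forall>x\<in>E. \<forall>y\<in>E. \<forall>z\<in>E. x \<le> y \<longrightarrow> gmul x z \<le> gmul y z) \<and>
     \<comment> \<open>(RG2) locally compact (topological) group for the induced topology\<close>
     continuous_on (E \<times> E) (\<lambda>(x, y). gmul x y) \<and> continuous_on E iv \<and>
     locally_compact_space (top_of_set E) \<and>
     \<comment> \<open>(RG3)\<close>
     (\<exists>h m. continuous_on E h \<and> (\<forall>x\<in>E. 0 < h x) \<and>
        (\<forall>x\<in>E. \<forall>y\<in>E. h (gmul x y) = h x * h y) \<and>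
        (\<exists>x\<in>E. \<exists>y\<in>E. h x \<noteq> h y) \<and>
        haar_measure_on E gmul m \<and>
        (\<forall>\<alpha>\<in>E. (\<integral>\<^sup>+x. indicator {\<epsilon>\<in>E. \<alpha> \<le> \<epsilon>} x * ennreal (h x) \<partial>m) < \<infinity>))"

text \<open>The filter of the limit \<open>\<epsilon> \<rightarrow> \<theta> = inf E\<close>, \<open>\<epsilon>\<close> ranging over E.\<close>

definition theta_filter :: "real set \<Rightarrow> real filter" where
  "theta_filter E = (INF \<alpha>\<in>E. principal {\<epsilon>\<in>E. \<epsilon> \<le> \<alpha>})"

definition is_action ::
  "real set \<Rightarrow> (real \<Rightarrow> real \<Rightarrow> real) \<Rightarrow> real \<Rightarrow> (real \<Rightarrow> 'a \<Rightarrow> 'a) \<Rightarrow> bool" where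
  "is_action E gmul e H \<longleftrightarrow>
     (\<forall>\<epsilon>\<in>E. bij (H \<epsilon>)) \<and>
     (\<forall>\<epsilon>\<in>E. \<forall>\<epsilon>'\<in>E. H \<epsilon> \<circ> H \<epsilon>' = H (gmul \<epsilon> \<epsilon>')) \<and> H e = id"

definition continuous_action ::
  "real set \<Rightarrow> (real \<Rightarrow> 'a::topological_space \<Rightarrow> 'a) \<Rightarrow> bool" where
  "continuous_action E H \<longleftrightarrow> continuous_on (E \<times> UNIV) (\<lambda>(\<epsilon>, x). H \<epsilon> x)"

definition is_center ::
  "real set \<Rightarrow> (real \<Rightarrow> real) \<Rightarrow> (real \<Rightarrow> 'a::topological_space \<Rightarrow> 'a) \<Rightarrow> 'a \<Rightarrow> bool" where
  "is_center E iv H \<omega> \<longleftrightarrow>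
     (\<forall>V x. \<omega> \<in> interior V \<longrightarrow>
        (\<exists>U \<alpha>. x \<in> interior U \<and> \<alpha> \<in> E \<and>
           (\<forall>\<epsilon>\<in>E. \<epsilon> \<le> \<alpha> \<longrightarrow> H (iv \<epsilon>) ` U \<subseteq> V)))"

definition absorptive ::
  "real set \<Rightarrow> (real \<Rightarrow> real) \<Rightarrow> (real \<Rightarrow> 'a::topological_space \<Rightarrow> 'a) \<Rightarrow> bool" where
  "absorptive E iv H \<longleftrightarrow> (\<exists>\<omega>. is_center E iv H \<omega>)"

definition center ::
  "real set \<Rightarrow> (real \<Rightarrow> real) \<Rightarrow> (real \<Rightarrow> 'a::topological_space \<Rightarrow> 'a) \<Rightarrow> 'a" where
  "center E iv H = (THE \<omega>. is_center E iv H \<omega>)"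

definition balanced ::
  "real set \<Rightarrow> real \<Rightarrow> (real \<Rightarrow> real) \<Rightarrow> (real \<Rightarrow> 'a \<Rightarrow> 'a) \<Rightarrow> 'a set \<Rightarrow> bool" where
  "balanced E e iv H T \<longleftrightarrow> (\<forall>\<epsilon>\<in>E. \<epsilon> \<le> e \<longrightarrow> H (iv \<epsilon>) ` T \<subseteq> T)"

definition elementary ::
  "real set \<Rightarrow> real \<Rightarrow> (real \<Rightarrow> real) \<Rightarrow> (real \<Rightarrow> 'a::topological_space \<Rightarrow> 'a) \<Rightarrow> 'a set \<Rightarrow> bool" where
  "elementary E e iv H T \<longleftrightarrow>
     balanced E e iv H T \<and> compact (closure T) \<and> center E iv H \<in> interior T"

definition radon_measure :: "'a::topological_space measure \<Rightarrow> bool" where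
  "radon_measure lam \<longleftrightarrow>
     sets lam = sets borel \<and>
     (\<forall>K. compact K \<longrightarrow> emeasure lam K < \<infinity>) \<and>
     (\<forall>A\<in>sets borel. emeasure lam A = (INF U\<in>{U. open U \<and> A \<subseteq> U}. emeasure lam U)) \<and>
     (\<forall>U. open U \<longrightarrow> emeasure lam U = (SUP K\<in>{K. compact K \<and> K \<subseteq> U}. emeasure lam K))"

definition Kc :: "('a::topological_space \<Rightarrow> complex) set" where
  "Kc = {\<phi>. continuous_on UNIV \<phi> \<and> compact (closure {x. \<phi> x \<noteq> 0})}"

definition homogeneous_measure ::
  "real set \<Rightarrow> (real \<Rightarrow> 'a::topological_space \<Rightarrow> 'a) \<Rightarrow> 'a measure \<Rightarrow> bool" where
  "homogeneous_measure E H lam \<longleftrightarrow>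
     (\<forall>\<epsilon>\<in>E. \<exists>c::real. 0 < c \<and>
        (\<forall>\<phi>\<in>Kc. (\<integral>x. \<phi> (H \<epsilon> x) \<partial>lam) = complex_of_real c * (\<integral>x. \<phi> x \<partial>lam)))"

definition homogenizer ::
  "real set \<Rightarrow> (real \<Rightarrow> real \<Rightarrow> real) \<Rightarrow> real \<Rightarrow> (real \<Rightarrow> real)
     \<Rightarrow> (real \<Rightarrow> 'a::{t2_space, first_countable_topology} \<Rightarrow> 'a) \<Rightarrow> 'a measure \<Rightarrow> bool" where
  "homogenizer E gmul e iv H lam \<longleftrightarrow>
     locally_compact_space (euclidean :: 'a topology) \<and> \<not> compact (UNIV :: 'a set) \<and>
     R_group E gmul e iv \<and>
     is_action E gmul e H \<and> continuous_action E H \<and> absorptive E iv H \<and>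
     radon_measure lam \<and> homogeneous_measure E H lam \<and>
     lam \<noteq> null_measure borel \<and> \<not> (\<forall>A\<in>sets borel. emeasure lam A = indicator A (center E iv H))"

definition BC :: "('a::topological_space \<Rightarrow> complex) set" where
  "BC = {u. continuous_on UNIV u \<and> bounded (range u)}"

text \<open>\<open>u \<circ> H_\<epsilon> \<rightarrow> c\<close> weak-* in \<open>L^\<infinity>(X) = L^1(X)'\<close> as \<open>\<epsilon> \<rightarrow> \<theta>\<close>.\<close>

definition weakstar_mean ::
  "real set \<Rightarrow> (real \<Rightarrow> 'a \<Rightarrow> 'a) \<Rightarrow> 'a measure \<Rightarrow> ('a \<Rightarrow> complex) \<Rightarrow> complex \<Rightarrow> bool" where
  "weakstar_mean E H lam u c \<longleftrightarrow>
     (\<forall>g::'a \<Rightarrow> complex. integrable lam g \<longrightarrow>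
        ((\<lambda>\<epsilon>. \<integral>x. u (H \<epsilon> x) * g x \<partial>lam) \<longlongrightarrow> c * (\<integral>x. g x \<partial>lam)) (theta_filter E))"

definition Pi_inf ::
  "real set \<Rightarrow> (real \<Rightarrow> 'a::topological_space \<Rightarrow> 'a) \<Rightarrow> 'a measure \<Rightarrow> ('a \<Rightarrow> complex) set" where
  "Pi_inf E H lam = {u \<in> BC. \<exists>c. weakstar_mean E H lam u c}"

definition mean_value ::
  "real set \<Rightarrow> (real \<Rightarrow> 'a \<Rightarrow> 'a) \<Rightarrow> 'a measure \<Rightarrow> ('a \<Rightarrow> complex) \<Rightarrow> complex" where
  "mean_value E H lam u = (THE c. weakstar_mean E H lam u c)"

definition lp_integral :: "'a measure \<Rightarrow> real \<Rightarrow> 'a set \<Rightarrow> ('a \<Rightarrow> complex) \<Rightarrow> ennreal" where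
  "lp_integral lam p A f = (\<integral>\<^sup>+x. indicator A x * ennreal (cmod (f x) powr p) \<partial>lam)"

definition Lp_loc :: "'a::topological_space measure \<Rightarrow> real \<Rightarrow> ('a \<Rightarrow> complex) set" where
  "Lp_loc lam p = {u. u \<in> borel_measurable lam \<and> (\<forall>K. compact K \<longrightarrow> lp_integral lam p K u < \<infinity>)}"

definition Xi ::
  "real set \<Rightarrow> real \<Rightarrow> (real \<Rightarrow> 'a::topological_space \<Rightarrow> 'a) \<Rightarrow> 'a measure \<Rightarrow> real \<Rightarrow> ('a \<Rightarrow> complex) set" where
  "Xi E e H lam p = {u \<in> Lp_loc lam p. \<forall>K. compact K \<longrightarrow>
      (SUP \<epsilon>\<in>{\<epsilon>\<in>E. \<epsilon> \<le> e}. lp_integral lam p K (u \<circ> H \<epsilon>)) < \<infinity>}"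

definition Xi_norm ::
  "real set \<Rightarrow> real \<Rightarrow> (real \<Rightarrow> 'a \<Rightarrow> 'a) \<Rightarrow> 'a measure \<Rightarrow> real \<Rightarrow> 'a set \<Rightarrow> ('a \<Rightarrow> complex) \<Rightarrow> real" where
  "Xi_norm E e H lam p B u =
     enn2real (SUP \<epsilon>\<in>{\<epsilon>\<in>E. \<epsilon> \<le> e}. lp_integral lam p B (u \<circ> H \<epsilon>)) powr (1 / p)"

text \<open>Closure of \<open>\<Pi>^\<infinity>\<close> in \<open>\<Xi>^p\<close> (with the norm built on B).\<close>

definition frakX ::
  "real set \<Rightarrow> real \<Rightarrow> (real \<Rightarrow> 'a::topological_space \<Rightarrow> 'a) \<Rightarrow> 'a measure \<Rightarrow> real \<Rightarrow> 'a set \<Rightarrow> ('a \<Rightarrow> complex) set" where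
  "frakX E e H lam p B = {u \<in> Xi E e H lam p.
      \<forall>\<delta>>0. \<exists>v\<in>Pi_inf E H lam. Xi_norm E e H lam p B (\<lambda>x. u x - v x) < \<delta>}"

text \<open>Weak convergence in \<open>L^p(\<Omega>)\<close>, \<open>1 \<le> p < \<infinity>\<close>: test functions range over
  \<open>L^{p'}(\<Omega>)\<close> (with \<open>L^\<infinity>\<close> for p = 1).\<close>

definition dual_test :: "'a measure \<Rightarrow> real \<Rightarrow> 'a set \<Rightarrow> ('a \<Rightarrow> complex) \<Rightarrow> bool" where
  "dual_test lam p \<Omega> g \<longleftrightarrow> g \<in> borel_measurable lam \<and>
     (if p = 1 then (\<exists>C. AE x in lam. x \<in> \<Omega> \<longrightarrow> cmod (g x) \<le> C)
      else lp_integral lam (p / (p - 1)) \<Omega> g < \<infinity>)"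

definition weak_Lp_conv ::
  "'a measure \<Rightarrow> real \<Rightarrow> 'a set \<Rightarrow> ('b \<Rightarrow> 'a \<Rightarrow> complex) \<Rightarrow> ('a \<Rightarrow> complex) \<Rightarrow> 'b filter \<Rightarrow> bool" where
  "weak_Lp_conv lam p \<Omega> f l F \<longleftrightarrow>
     (\<forall>\<^sub>F \<epsilon> in F. f \<epsilon> \<in> borel_measurable lam \<and> lp_integral lam p \<Omega> (f \<epsilon>) < \<infinity>) \<and>
     (\<forall>g. dual_test lam p \<Omega> g \<longrightarrow>
        ((\<lambda>\<epsilon>. set_lebesgue_integral lam \<Omega> (\<lambda>x. f \<epsilon> x * g x))
           \<longlongrightarrow> set_lebesgue_integral lam \<Omega> (\<lambda>x. l x * g x)) F)"

definition cont_lin_extension ::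
  "real set \<Rightarrow> real \<Rightarrow> (real \<Rightarrow> 'a::topological_space \<Rightarrow> 'a) \<Rightarrow> 'a measure \<Rightarrow> real \<Rightarrow> 'a set
     \<Rightarrow> (('a \<Rightarrow> complex) \<Rightarrow> complex) \<Rightarrow> bool" where
  "cont_lin_extension E e H lam p B M' \<longleftrightarrow>
     (\<forall>u\<in>frakX E e H lam p B. \<forall>v\<in>frakX E e H lam p B. M' (\<lambda>x. u x + v x) = M' u + M' v) \<and>
     (\<forall>u\<in>frakX E e H lam p B. \<forall>c. M' (\<lambda>x. c * u x) = c * M' u) \<and>
     (\<exists>C. \<forall>u\<in>frakX E e H lam p B. cmod (M' u) \<le> C * Xi_norm E e H lam p B u) \<and>
     (\<forall>u\<in>Pi_inf E H lam. M' u = mean_value E H lam u)"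

end

theory Submission
  imports Defs
begin

locale hset =
  fixes E :: "real set" and gmul :: "real \<Rightarrow> real \<Rightarrow> real" and e :: real
    and iv :: "real \<Rightarrow> real"
    and H :: "real \<Rightarrow> 'a::{t2_space, first_countable_topology} \<Rightarrow> 'a"
    and lam :: "'a measure" and p :: real and B :: "'a set"
  assumes hom: "homogenizer E gmul e iv H lam"
    and p1: "1 \<le> p"
    and Bopen: "open B" and Belem: "elementary E e iv H B"
begin

lemma RG: "R_group E gmul e iv" using hom by (simp add: homogenizer_def)

lemma gclosed: "x \<in> E \<Longrightarrow> y \<in> E \<Longrightarrow> gmul x y \<in> E"
  and eE: "e \<in> E" and ivE: "x \<in> E \<Longrightarrow> iv x \<in> E"
  and gcomm: "x \<in> E \<Longrightarrow> y \<in> E \<Longrightarrow> gmul x y = gmul y x"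
  and ginv: "x \<in> E \<Longrightarrow> gmul (iv x) x = e"
  and gmono: "x \<in> E \<Longrightarrow> y \<in> E \<Longrightarrow> z \<in> E \<Longrightarrow> x \<le> y \<Longrightarrow> gmul x z \<le> gmul y z"
  using RG unfolding R_group_def by blast+

lemma act: "is_action E gmul e H" using hom by (simp add: homogenizer_def)

lemma Hbij: "\<epsilon> \<in> E \<Longrightarrow> bij (H \<epsilon>)"
  and Hcomp: "\<epsilon> \<in> E \<Longrightarrow> \<epsilon>' \<in> E \<Longrightarrow> H \<epsilon> (H \<epsilon>' x) = H (gmul \<epsilon> \<epsilon>') x"
  and He: "H e = id"
  using act unfolding is_action_def by (auto simp: fun_eq_iff dest!: bspec)

lemma Hinv1: "\<beta> \<in> E \<Longrightarrow> H \<beta> (H (iv \<beta>) x) = x"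
  using Hcomp[of \<beta> "iv \<beta>" x] ivE gcomm[of \<beta> "iv \<beta>"] ginv[of \<beta>] He by simp

lemma Hinv2: "\<beta> \<in> E \<Longrightarrow> H (iv \<beta>) (H \<beta> x) = x"
  using Hcomp[of "iv \<beta>" \<beta> x] ivE ginv[of \<beta>] He by simp

lemma Hcont: "\<epsilon> \<in> E \<Longrightarrow> continuous_on UNIV (H \<epsilon>)"
proof -
  assume "\<epsilon> \<in> E"
  have c: "continuous_on (E \<times> UNIV) (\<lambda>(\<epsilon>, x). H \<epsilon> x)"
    using hom by (simp add: homogenizer_def continuous_action_def)
  have "continuous_on UNIV ((\<lambda>(\<epsilon>, x). H \<epsilon> x) \<circ> (\<lambda>x. (\<epsilon>, x)))"
    apply (rule continuous_on_compose)
     apply (intro continuous_intros)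
    using c \<open>\<epsilon> \<in> E\<close> by (auto intro: continuous_on_subset)
  then show ?thesis by (simp add: o_def)
qed

lemma Himage: assumes b: "\<beta> \<in> E" shows "H \<beta> ` S = H (iv \<beta>) -` S"
proof safe
  fix x assume "x \<in> S" then show "H \<beta> x \<in> H (iv \<beta>) -` S" using Hinv2 b by simp
next
  fix x assume "H (iv \<beta>) x \<in> S" then show "x \<in> H \<beta> ` S"
    using Hinv1[OF b, of x] by (metis imageI)
qed

lemma Himage_open: "\<beta> \<in> E \<Longrightarrow> open S \<Longrightarrow> open (H \<beta> ` S)"
  proof -
  assume a: "\<beta> \<in> E" "open S"
  have "open (H (iv \<beta>) -` S)"
    using continuous_on_open_vimage[OF open_UNIV, of "H (iv \<beta>)"] Hcont[OF ivE[OF a(1)]] a(2) by simp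
  then show ?thesis using Himage[OF a(1)] by simp
qed

lemma Hmeas: "\<epsilon> \<in> E \<Longrightarrow> H \<epsilon> \<in> borel_measurable borel"
  using Hcont borel_measurable_continuous_onI by blast

lemma lam_sets: "sets lam = sets borel" and lam_space: "space lam = UNIV"
  using hom unfolding homogenizer_def radon_measure_def by (auto dest: sets_eq_imp_space_eq)

end

context hset
begin

lemma center_ok: "is_center E iv H (center E iv H)"
proof -
  have "absorptive E iv H" using hom by (simp add: homogenizer_def)
  then obtain \<omega> where w: "is_center E iv H \<omega>" unfolding absorptive_def by blast
  have uniq: "\<omega>' = \<omega>" if w': "is_center E iv H \<omega>'" for \<omega>'
  proof (rule ccontr)
    assume ne: "\<omega>' \<noteq> \<omega>"
    obtain V1 V2 where V: "open V1" "open V2" "\<omega>' \<in> V1" "\<omega> \<in> V2" "V1 \<inter> V2 = {}"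
      using hausdorff[OF ne] by blast
    fix x :: 'a
    obtain U1 a1 where U1: "x \<in> interior U1" "a1 \<in> E" "\<forall>\<epsilon>\<in>E. \<epsilon> \<le> a1 \<longrightarrow> H (iv \<epsilon>) ` U1 \<subseteq> V1"
    proof -
      have "\<omega>' \<in> interior V1" using V(1,3) by (simp add: interior_open)
      then show ?thesis using w' unfolding is_center_def by (meson that)
    qed
    obtain U2 a2 where U2: "x \<in> interior U2" "a2 \<in> E" "\<forall>\<epsilon>\<in>E. \<epsilon> \<le> a2 \<longrightarrow> H (iv \<epsilon>) ` U2 \<subseteq> V2"
    proof -
      have "\<omega> \<in> interior V2" using V(2,4) by (simp add: interior_open)
      then show ?thesis using w unfolding is_center_def by (meson that)
    qed
    define m where "m = min a1 a2"
    have "m \<in> E" using U1 U2 by (simp add: m_def min_def)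
    have "x \<in> U1" "x \<in> U2" using U1 U2 interior_subset by blast+
    have "m \<le> a1" "m \<le> a2" by (simp_all add: m_def)
    have "H (iv m) ` U1 \<subseteq> V1" using U1(3) \<open>m \<in> E\<close> \<open>m \<le> a1\<close> by blast
    moreover have "H (iv m) ` U2 \<subseteq> V2" using U2(3) \<open>m \<in> E\<close> \<open>m \<le> a2\<close> by blast
    ultimately have "H (iv m) x \<in> V1" "H (iv m) x \<in> V2" using \<open>x \<in> U1\<close> \<open>x \<in> U2\<close> by blast+
    then show False using V(5) by blast
  qed
  show ?thesis unfolding center_def by (rule theI[of "is_center E iv H" \<omega>]) (use w uniq in blast)+
qed

lemma eventually_theta: "eventually P (theta_filter E) \<longleftrightarrow> (\<exists>\<alpha>\<in>E. \<forall>\<epsilon>\<in>E. \<epsilon> \<le> \<alpha> \<longrightarrow> P \<epsilon>)"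
proof -
  have "eventually P (theta_filter E) \<longleftrightarrow> (\<exists>b\<in>E. eventually P (principal {\<epsilon> \<in> E. \<epsilon> \<le> b}))"
    unfolding theta_filter_def
  proof (rule eventually_INF_base)
    show "E \<noteq> {}" using eE by blast
    fix a b assume "a \<in> E" "b \<in> E"
    then show "\<exists>x\<in>E. principal {\<epsilon> \<in> E. \<epsilon> \<le> x} \<le> inf (principal {\<epsilon> \<in> E. \<epsilon> \<le> a}) (principal {\<epsilon> \<in> E. \<epsilon> \<le> b})"
      by (intro bexI[of _ "min a b"]) (auto simp: min_def)
  qed
  then show ?thesis by (auto simp: eventually_principal)
qed

lemma theta_nontriv: "\<not> trivial_limit (theta_filter E)"
  unfolding trivial_limit_def eventually_theta by auto

lemma eventually_theta_le: "\<alpha> \<in> E \<Longrightarrow> eventually (\<lambda>\<epsilon>. \<epsilon> \<in> E \<and> \<epsilon> \<le> \<alpha>) (theta_filter E)"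
  unfolding eventually_theta by auto

lemma cover:
  assumes K: "compact K"
  shows "\<exists>\<beta>\<in>E. K \<subseteq> H \<beta> ` B"
proof -
  have wB: "center E iv H \<in> interior B" using Belem by (simp add: elementary_def)
  have "\<forall>x. \<exists>U \<alpha>. x \<in> interior U \<and> \<alpha> \<in> E \<and> (\<forall>\<epsilon>\<in>E. \<epsilon> \<le> \<alpha> \<longrightarrow> H (iv \<epsilon>) ` U \<subseteq> B)"
    using center_ok wB unfolding is_center_def by blast
  then obtain U al where U: "\<And>x. x \<in> interior (U x)" "\<And>x. al x \<in> E"
     "\<And>x \<epsilon>. \<epsilon> \<in> E \<Longrightarrow> \<epsilon> \<le> al x \<Longrightarrow> H (iv \<epsilon>) ` U x \<subseteq> B"
    by metis
  have "K \<subseteq> (\<Union>x\<in>K. interior (U x))" using U(1) by blast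
  then obtain F where F: "F \<subseteq> K" "finite F" "K \<subseteq> (\<Union>x\<in>F. interior (U x))"
    using compactE_image[OF K, of K "\<lambda>x. interior (U x)"] by (metis open_interior)
  show ?thesis
  proof (cases "F = {}")
    case True
    then have "K = {}" using F by simp
    then show ?thesis using eE by blast
  next
    case False
    define \<beta> where "\<beta> = Min (al ` F)"
    have "\<beta> \<in> al ` F" unfolding \<beta>_def using False F(2) by (intro Min_in) auto
    then have bE: "\<beta> \<in> E" using U(2) by blast
    have "y \<in> H \<beta> ` B" if "y \<in> K" for y
    proof -
      obtain x where x: "x \<in> F" "y \<in> interior (U x)" using F(3) \<open>y \<in> K\<close> by blast
      have "\<beta> \<le> al x" unfolding \<beta>_def using x(1) F(2) by simp
      moreover have "y \<in> U x" using x(2) interior_subset by blast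
      ultimately have "H (iv \<beta>) y \<in> B" using U(3)[OF bE, of x] by blast
      moreover have "y = H \<beta> (H (iv \<beta>) y)" using Hinv1[OF bE] by simp
      ultimately show ?thesis by blast
    qed
    then show ?thesis using bE by blast
  qed
qed

end

lemma Hausdorff_t2: "Hausdorff_space (euclidean :: 'a::t2_space topology)"
  unfolding Hausdorff_space_def
proof (intro allI impI)
  fix x y :: 'a assume a: "x \<in> topspace euclidean \<and> y \<in> topspace euclidean \<and> x \<noteq> y"
  then have "x \<noteq> y" by blast
  then obtain U V where "open U" "open V" "x \<in> U" "y \<in> V" "U \<inter> V = {}" using separation_t2[of x y] by blast
  then show "\<exists>U V. openin euclidean U \<and> openin euclidean V \<and> x \<in> U \<and> y \<in> V \<and> disjnt U V"
    by (auto simp: disjnt_def)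
qed

lemma bump:
  fixes K U :: "'a::t2_space set"
  assumes lc: "locally_compact_space (euclidean :: 'a topology)"
    and K: "compact K" and U: "open U" and KU: "K \<subseteq> U"
  shows "\<exists>f::'a \<Rightarrow> real. continuous_on UNIV f \<and> (\<forall>x. 0 \<le> f x \<and> f x \<le> 1) \<and>
           (\<forall>x\<in>K. f x = 1) \<and> (\<forall>x. x \<notin> U \<longrightarrow> f x = 0) \<and> compact (closure {x. f x \<noteq> 0})"
proof -
  have lcU: "locally_compact_space (top_of_set U)"
    using locally_compact_space_open_subset[OF disjI1[OF Hausdorff_t2] lc open_openin[THEN iffD1, OF U]] .
  have HU: "Hausdorff_space (top_of_set U)"
    using Hausdorff_space_subtopology[OF Hausdorff_t2] .
  have "compactin (top_of_set U) K" unfolding compactin_subtopology using K KU by simp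
  then obtain V L where VL: "openin (top_of_set U) V" "compactin (top_of_set U) L"
      "closedin (top_of_set U) L" "K \<subseteq> V" "V \<subseteq> L"
    using iffD1[OF locally_compact_space_compact_closed_compact[OF disjI1[OF HU]] lcU, rule_format, OF \<open>compactin (top_of_set U) K\<close>]
    by blast
  have Vo: "open V" using openin_open_trans[OF VL(1) U] .
  have Lc: "compact L" "L \<subseteq> U" using VL(2) unfolding compactin_subtopology by auto
  have VU: "V \<subseteq> U" using VL(5) Lc(2) by blast
  have cr: "completely_regular_space (euclidean :: 'a topology)"
    using locally_compact_regular_imp_completely_regular_space[OF lc disjI1[OF Hausdorff_t2]] .
  have cl: "closedin euclidean (- V)" using closed_closedin[THEN iffD1, OF closed_Compl[OF Vo]] .
  obtain f where f: "continuous_map euclidean (top_of_set {0..1::real}) f" "f ` (- V) \<subseteq> {0}" "f ` K \<subseteq> {1}"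
  proof (rule Urysohn_completely_regular_compact_closed[of 0 1 euclidean K "- V"])
    show "compactin euclidean K" using K by simp
    show "disjnt K (- V)" using VL(4) by (auto simp: disjnt_def)
    show "completely_regular_space (euclidean :: 'a topology)" by (rule cr)
    show "closedin (euclidean :: 'a topology) (- V)" by (rule cl)
  qed (use that in auto)
  have fc: "continuous_on UNIV f" using f(1)
    by (simp add: continuous_map_in_subtopology continuous_map_iff_continuous)
  have "f \<in> UNIV \<rightarrow> {0..1}" using f(1) unfolding continuous_map_in_subtopology by simp
  then have f01: "\<forall>x. 0 \<le> f x \<and> f x \<le> 1" by auto
  have supp: "{x. f x \<noteq> 0} \<subseteq> L" using f(2) VL(5) by blast
  have "closed L" using Lc(1) compact_imp_closed by blast
  then have "closure {x. f x \<noteq> 0} \<subseteq> L" using supp closure_minimal by blast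
  then have "compact (closure {x. f x \<noteq> 0})" using Lc(1) compact_Int_closed[of L "closure {x. f x \<noteq> 0}"]
    by (simp add: Int_absorb1)
  moreover have "\<forall>x. x \<notin> U \<longrightarrow> f x = 0" using f(2) VU by blast
  ultimately show ?thesis using fc f01 f(3) by blast
qed


lemma ennreal_integral_le_nn:
  fixes f :: "'a \<Rightarrow> real"
  assumes "f \<in> borel_measurable M" "\<And>x. 0 \<le> f x"
  shows "ennreal (integral\<^sup>L M f) \<le> (\<integral>\<^sup>+x. ennreal (f x) \<partial>M)"
proof -
  have "integral\<^sup>L M f = enn2real (\<integral>\<^sup>+ x. ennreal (f x) \<partial>M)"
    using integral_eq_nn_integral[of f M] assms by simp
  then show ?thesis by (simp add: ennreal_enn2real_if)
qed

context hset
begin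

lemma radon: "radon_measure lam" using hom by (simp add: homogenizer_def)

lemma lam_compact: "compact K \<Longrightarrow> emeasure lam K < \<infinity>"
  using radon[unfolded radon_measure_def, THEN conjunct2, THEN conjunct1] by blast

lemma lam_outer: "A \<in> sets borel \<Longrightarrow> emeasure lam A = (INF U\<in>{U. open U \<and> A \<subseteq> U}. emeasure lam U)"
  using radon[unfolded radon_measure_def, THEN conjunct2, THEN conjunct2, THEN conjunct1, THEN bspec] .

lemma lam_inner: "open U \<Longrightarrow> emeasure lam U = (SUP K\<in>{K. compact K \<and> K \<subseteq> U}. emeasure lam K)"
  using radon[unfolded radon_measure_def, THEN conjunct2, THEN conjunct2, THEN conjunct2, rule_format] .

lemma lc: "locally_compact_space (euclidean :: 'a topology)"
  using hom by (simp add: homogenizer_def)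

lemma homog: "\<beta> \<in> E \<Longrightarrow> \<exists>c::real. 0 < c \<and>
        (\<forall>\<phi>\<in>Kc. (\<integral>x. \<phi> (H \<beta> x) \<partial>lam) = complex_of_real c * (\<integral>x. \<phi> x \<partial>lam))"
proof -
  assume "\<beta> \<in> E"
  have "homogeneous_measure E H lam" using hom by (simp add: homogenizer_def)
  then show ?thesis using \<open>\<beta> \<in> E\<close> unfolding homogeneous_measure_def by (rule bspec)
qed

lemma bl_meas: "f \<in> borel_measurable borel \<Longrightarrow> f \<in> borel_measurable lam"
  using lam_sets measurable_cong_sets by blast

lemma Hmeas_lam: "\<epsilon> \<in> E \<Longrightarrow> H \<epsilon> \<in> measurable lam borel"
  using Hmeas[of \<epsilon>] measurable_cong_sets[OF lam_sets refl] by blast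

lemma meas_ineq:
  assumes bE: "\<beta> \<in> E"
  shows "\<exists>c>0. \<forall>A\<in>sets borel. ennreal c * emeasure lam A \<le> emeasure lam (H \<beta> -` A)"
proof -
  obtain c where c: "0 < c" "\<And>\<phi>. \<phi> \<in> Kc \<Longrightarrow> (\<integral>x. \<phi> (H \<beta> x) \<partial>lam) = complex_of_real c * (\<integral>x. \<phi> x \<partial>lam)"
    using homog[OF bE] by blast
  have opn: "ennreal c * emeasure lam U \<le> emeasure lam (H \<beta> -` U)" if U: "open U" for U
  proof -
    have "ennreal c * emeasure lam K \<le> emeasure lam (H \<beta> -` U)" if K: "compact K" "K \<subseteq> U" for K
    proof -
      obtain f :: "'a \<Rightarrow> real" where f: "continuous_on UNIV f" "\<forall>x. 0 \<le> f x \<and> f x \<le> 1"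
        "\<forall>x\<in>K. f x = 1" "\<forall>x. x \<notin> U \<longrightarrow> f x = 0" "compact (closure {x. f x \<noteq> 0})"
        using bump[OF lc K(1) U K(2)] by blast
      define L where "L = closure {x. f x \<noteq> 0}"
      have fm: "f \<in> borel_measurable lam" using bl_meas borel_measurable_continuous_onI f(1) by blast
      have fHm: "(\<lambda>x. f (H \<beta> x)) \<in> borel_measurable lam"
        using measurable_compose[OF Hmeas_lam[OF bE] borel_measurable_continuous_onI[OF f(1)]] by (simp add: o_def)
      have Lsets: "L \<in> sets lam" using lam_sets L_def by simp
      have fL: "f x \<le> indicator L x" for x
        using f(2) closure_subset[of "{x. f x \<noteq> 0}"] unfolding L_def by (cases "f x = 0") (auto simp: indicator_def)
      have "(\<integral>\<^sup>+x. ennreal (f x) \<partial>lam) \<le> (\<integral>\<^sup>+x. indicator L x \<partial>lam)"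
        by (intro nn_integral_mono) (metis ennreal_indicator ennreal_leI fL)
      also have "\<dots> = emeasure lam L" using Lsets by simp
      also have "\<dots> < \<infinity>" using lam_compact f(5) L_def by simp
      finally have fint: "integrable lam f"
        using integrableI_nonneg[OF fm] f(2) by auto
      have Kc: "(\<lambda>x. complex_of_real (f x)) \<in> Kc"
        unfolding Kc_def using f(1,5) by (auto intro!: continuous_intros)
      have "complex_of_real (integral\<^sup>L lam (\<lambda>x. f (H \<beta> x))) = complex_of_real c * complex_of_real (integral\<^sup>L lam f)"
        using c(2)[OF Kc] by simp
      then have eq: "integral\<^sup>L lam (\<lambda>x. f (H \<beta> x)) = c * integral\<^sup>L lam f"
        by (metis of_real_eq_iff of_real_mult)
      have "emeasure lam K = (\<integral>\<^sup>+x. indicator K x \<partial>lam)"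
        using lam_sets compact_imp_closed[OF K(1)] by simp
      also have "\<dots> \<le> (\<integral>\<^sup>+x. ennreal (f x) \<partial>lam)"
        by (intro nn_integral_mono) (use f(3) in \<open>auto simp: indicator_def\<close>)
      also have "\<dots> = ennreal (integral\<^sup>L lam f)"
        using nn_integral_eq_integral[OF fint] f(2) by simp
      finally have "ennreal c * emeasure lam K \<le> ennreal c * ennreal (integral\<^sup>L lam f)"
        by (simp add: mult_left_mono)
      also have "\<dots> = ennreal (integral\<^sup>L lam (\<lambda>x. f (H \<beta> x)))"
      proof -
        have "0 \<le> integral\<^sup>L lam f" using f(2) by (intro integral_nonneg_AE) auto
        then show ?thesis using eq c(1) by (simp add: ennreal_mult)
      qed
      also have "\<dots> \<le> (\<integral>\<^sup>+x. ennreal (f (H \<beta> x)) \<partial>lam)"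
        using ennreal_integral_le_nn[OF fHm] f(2) by simp
      also have "\<dots> \<le> (\<integral>\<^sup>+x. indicator (H \<beta> -` U) x \<partial>lam)"
        by (intro nn_integral_mono) (use f(2,4) in \<open>auto simp: indicator_def\<close>)
      also have "\<dots> = emeasure lam (H \<beta> -` U)"
      proof -
        have "H \<beta> -` U \<in> sets borel"
          using measurable_sets[OF Hmeas[OF bE], of U] U by simp
        then show ?thesis using lam_sets by simp
      qed
      finally show ?thesis .
    qed
    then have "(SUP K\<in>{K. compact K \<and> K \<subseteq> U}. ennreal c * emeasure lam K) \<le> emeasure lam (H \<beta> -` U)"
      by (intro SUP_least) auto
    then show ?thesis using lam_inner[OF U] by (simp add: SUP_mult_left_ennreal)
  qed
  have "ennreal c * emeasure lam A \<le> emeasure lam (H \<beta> -` A)" if A: "A \<in> sets borel" for A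
  proof -
    have "ennreal c * emeasure lam A \<le> emeasure lam V" if V: "open V" "H \<beta> -` A \<subseteq> V" for V
    proof -
      have Uo: "open (H \<beta> ` V)" using Himage_open[OF bE V(1)] .
      have AU: "A \<subseteq> H \<beta> ` V"
      proof
        fix a assume "a \<in> A"
        then have "H (iv \<beta>) a \<in> V" using V(2) Hinv1[OF bE, of a] by auto
        then show "a \<in> H \<beta> ` V" using Hinv1[OF bE, of a] by (metis imageI)
      qed
      have pre: "H \<beta> -` (H \<beta> ` V) = V"
        using Hbij[OF bE] by (simp add: bij_def inj_vimage_image_eq)
      have "emeasure lam A \<le> emeasure lam (H \<beta> ` V)"
        using emeasure_mono[OF AU] Uo lam_sets by simp
      then have "ennreal c * emeasure lam A \<le> ennreal c * emeasure lam (H \<beta> ` V)"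
        by (simp add: mult_left_mono)
      also have "\<dots> \<le> emeasure lam V" using opn[OF Uo] pre by simp
      finally show ?thesis .
    qed
    then have "ennreal c * emeasure lam A \<le> (INF V\<in>{V. open V \<and> H \<beta> -` A \<subseteq> V}. emeasure lam V)"
      by (intro INF_greatest) auto
    also have "\<dots> = emeasure lam (H \<beta> -` A)"
    proof -
      have "H \<beta> -` A \<in> sets borel"
        using measurable_sets[OF Hmeas[OF bE] A] by simp
      then show ?thesis using lam_outer by simp
    qed
    finally show ?thesis .
  qed
  then show ?thesis using c(1) by blast
qed

lemma meas_ineq_nn:
  assumes bE: "\<beta> \<in> E"
  shows "\<exists>c>0. \<forall>f::'a \<Rightarrow> ennreal. f \<in> borel_measurable borel \<longrightarrow>
           ennreal c * (\<integral>\<^sup>+x. f x \<partial>lam) \<le> (\<integral>\<^sup>+x. f (H \<beta> x) \<partial>lam)"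
proof -
  obtain c where c: "c > 0" "\<And>A. A \<in> sets borel \<Longrightarrow> ennreal c * emeasure lam A \<le> emeasure lam (H \<beta> -` A)"
    using meas_ineq[OF bE] by blast
  have le: "scale_measure (ennreal c) lam \<le> distr lam borel (H \<beta>)"
  proof -
    have sp: "space (scale_measure (ennreal c) lam) = space (distr lam borel (H \<beta>))"
      by (simp add: space_scale_measure lam_space)
    have st: "sets (scale_measure (ennreal c) lam) = sets (distr lam borel (H \<beta>))"
      by (simp add: lam_sets)
    have "emeasure (scale_measure (ennreal c) lam) A \<le> emeasure (distr lam borel (H \<beta>)) A" for A
    proof (cases "A \<in> sets borel")
      case True
      then show ?thesis using c(2)[OF True] emeasure_distr[OF Hmeas_lam[OF bE] True] lam_space by simp
    next
      case False
      then have "A \<notin> sets lam" using lam_sets by simp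
      then show ?thesis by (simp add: emeasure_notin_sets)
    qed
    then show ?thesis unfolding le_measure_iff using sp st by (auto simp: le_fun_def)
  qed
  have "ennreal c * (\<integral>\<^sup>+x. f x \<partial>lam) \<le> (\<integral>\<^sup>+x. f (H \<beta> x) \<partial>lam)"
    if f: "f \<in> borel_measurable borel" for f :: "'a \<Rightarrow> ennreal"
  proof -
    have "ennreal c * (\<integral>\<^sup>+x. f x \<partial>lam) = nn_integral (scale_measure (ennreal c) lam) f"
      using nn_integral_scale_measure[OF bl_meas[OF f]] by simp
    also have "\<dots> \<le> nn_integral (distr lam borel (H \<beta>)) f"
      by (rule nn_integral_mono_measure) (use le lam_sets in simp_all)
    also have "\<dots> = (\<integral>\<^sup>+x. f (H \<beta> x) \<partial>lam)"
      by (rule nn_integral_distr[OF Hmeas_lam[OF bE]]) (use f in simp)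
    finally show ?thesis .
  qed
  then show ?thesis using c(1) by blast
qed

end

context hset
begin

lemma Bsets: "B \<in> sets lam" using Bopen lam_sets by simp

lemma Bcl: "compact (closure B)" using Belem by (simp add: elementary_def)

lemma Bfin: "emeasure lam B < \<infinity>"
proof -
  have "emeasure lam B \<le> emeasure lam (closure B)"
    by (rule emeasure_mono) (use closure_subset lam_sets in auto)
  then show ?thesis using lam_compact[OF Bcl] by simp
qed

lemma Bpos: "emeasure lam B > 0"
proof (rule ccontr)
  assume "\<not> emeasure lam B > 0"
  then have B0: "emeasure lam B = 0" by simp
  have K0: "emeasure lam K = 0" if K: "compact K" for K
  proof -
    obtain \<beta> where b: "\<beta> \<in> E" "K \<subseteq> H \<beta> ` B" using cover[OF K] by blast
    obtain c where c: "c > 0" "\<And>A. A \<in> sets borel \<Longrightarrow> ennreal c * emeasure lam A \<le> emeasure lam (H \<beta> -` A)"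
      using meas_ineq[OF b(1)] by blast
    have o: "open (H \<beta> ` B)" using Himage_open[OF b(1) Bopen] .
    have pre: "H \<beta> -` (H \<beta> ` B) = B"
      using Hbij[OF b(1)] by (simp add: bij_def inj_vimage_image_eq)
    have "ennreal c * emeasure lam (H \<beta> ` B) \<le> 0" using c(2)[of "H \<beta> ` B"] o pre B0 by simp
    then have "emeasure lam (H \<beta> ` B) = 0" using c(1) by (simp add: ennreal_zero_less_mult_iff le_zero_eq)
    moreover have "emeasure lam K \<le> emeasure lam (H \<beta> ` B)"
      by (rule emeasure_mono) (use b(2) o lam_sets in auto)
    ultimately show ?thesis by simp
  qed
  have ne: "{K::'a set. compact K} \<noteq> {}" using compact_empty by blast
  have U0: "emeasure lam UNIV = 0"
    using lam_inner[OF open_UNIV] K0 SUP_const[OF ne, of "0::ennreal"] by simp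
  have "lam = null_measure borel"
  proof (rule measure_eqI)
    show "sets lam = sets (null_measure borel)" using lam_sets by simp
    fix A assume "A \<in> sets lam"
    have "emeasure lam A \<le> emeasure lam UNIV"
      by (rule emeasure_mono) (auto simp: lam_sets)
    then show "emeasure lam A = emeasure (null_measure borel) A" using U0 by simp
  qed
  moreover have "lam \<noteq> null_measure borel" using hom by (simp add: homogenizer_def)
  ultimately show False by blast
qed

lemma meas_lam_borel: "f \<in> borel_measurable lam \<Longrightarrow> f \<in> borel_measurable borel"
  using lam_sets measurable_cong_sets by blast

lemma L2:
  assumes K: "compact K"
  shows "\<exists>\<alpha>\<in>E. \<exists>C\<ge>0. \<forall>w. w \<in> borel_measurable lam \<longrightarrow> (\<forall>\<epsilon>\<in>E. \<epsilon> \<le> \<alpha> \<longrightarrow>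
      lp_integral lam p K (w \<circ> H \<epsilon>) \<le> ennreal C * (SUP \<epsilon>'\<in>{\<epsilon>\<in>E. \<epsilon> \<le> e}. lp_integral lam p B (w \<circ> H \<epsilon>')))"
proof -
  obtain \<beta> where b: "\<beta> \<in> E" "K \<subseteq> H \<beta> ` B" using cover[OF K] by blast
  obtain c where c: "c > 0" "\<And>f::'a \<Rightarrow> ennreal. f \<in> borel_measurable borel \<Longrightarrow>
           ennreal c * (\<integral>\<^sup>+x. f x \<partial>lam) \<le> (\<integral>\<^sup>+x. f (H \<beta> x) \<partial>lam)"
    using meas_ineq_nn[OF b(1)] by blast
  have o: "open (H \<beta> ` B)" using Himage_open[OF b(1) Bopen] .
  have inj: "inj (H \<beta>)" using Hbij[OF b(1)] by (simp add: bij_def)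
  have main: "lp_integral lam p K (w \<circ> H \<epsilon>) \<le> ennreal (1/c) * (SUP \<epsilon>'\<in>{\<epsilon>\<in>E. \<epsilon> \<le> e}. lp_integral lam p B (w \<circ> H \<epsilon>'))"
    if w: "w \<in> borel_measurable lam" and eps: "\<epsilon> \<in> E" "\<epsilon> \<le> iv \<beta>" for w \<epsilon>
  proof -
    define F where "F x = indicator (H \<beta> ` B) x * ennreal (cmod (w (H \<epsilon> x)) powr p)" for x
    have wb: "w \<in> borel_measurable borel" using meas_lam_borel[OF w] .
    have m0[measurable]: "(\<lambda>x. w (H \<epsilon> x)) \<in> borel_measurable borel"
      by (rule measurable_compose[OF Hmeas[OF eps(1)] wb])
    have m1[measurable]: "H \<beta> ` B \<in> sets borel" using o by simp
    have Fm: "F \<in> borel_measurable borel"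
      unfolding F_def by measurable
    have "lp_integral lam p K (w \<circ> H \<epsilon>) \<le> (\<integral>\<^sup>+x. F x \<partial>lam)"
      unfolding lp_integral_def F_def
      by (intro nn_integral_mono) (use b(2) in \<open>auto simp: indicator_def\<close>)
    moreover have "ennreal c * (\<integral>\<^sup>+x. F x \<partial>lam) \<le> lp_integral lam p B (w \<circ> H (gmul \<epsilon> \<beta>))"
    proof -
      have "ennreal c * (\<integral>\<^sup>+x. F x \<partial>lam) \<le> (\<integral>\<^sup>+x. F (H \<beta> x) \<partial>lam)" using c(2)[OF Fm] .
      also have "(\<lambda>x. F (H \<beta> x)) = (\<lambda>x. indicator B x * ennreal (cmod ((w \<circ> H (gmul \<epsilon> \<beta>)) x) powr p))"
      proof
        fix x
        have "indicator (H \<beta> ` B) (H \<beta> x) = (indicator B x :: ennreal)"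
          using inj by (simp add: indicator_def inj_image_mem_iff)
        then show "F (H \<beta> x) = indicator B x * ennreal (cmod ((w \<circ> H (gmul \<epsilon> \<beta>)) x) powr p)"
          unfolding F_def using Hcomp[OF eps(1) b(1)] by simp
      qed
      finally show ?thesis unfolding lp_integral_def .
    qed
    moreover have "lp_integral lam p B (w \<circ> H (gmul \<epsilon> \<beta>)) \<le> (SUP \<epsilon>'\<in>{\<epsilon>\<in>E. \<epsilon> \<le> e}. lp_integral lam p B (w \<circ> H \<epsilon>'))"
    proof (rule SUP_upper)
      have "gmul \<epsilon> \<beta> \<le> gmul (iv \<beta>) \<beta>" using gmono[OF eps(1) ivE[OF b(1)] b(1) eps(2)] .
      then show "gmul \<epsilon> \<beta> \<in> {\<epsilon> \<in> E. \<epsilon> \<le> e}" using ginv[OF b(1)] gclosed[OF eps(1) b(1)] by simp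
    qed
    ultimately have "ennreal c * lp_integral lam p K (w \<circ> H \<epsilon>) \<le> (SUP \<epsilon>'\<in>{\<epsilon>\<in>E. \<epsilon> \<le> e}. lp_integral lam p B (w \<circ> H \<epsilon>'))"
      by (meson dual_order.trans mult_left_mono zero_le)
    then have "ennreal (1/c) * (ennreal c * lp_integral lam p K (w \<circ> H \<epsilon>)) \<le> ennreal (1/c) * (SUP \<epsilon>'\<in>{\<epsilon>\<in>E. \<epsilon> \<le> e}. lp_integral lam p B (w \<circ> H \<epsilon>'))"
      by (rule mult_left_mono) simp
    moreover have "ennreal (1/c) * (ennreal c * lp_integral lam p K (w \<circ> H \<epsilon>)) = lp_integral lam p K (w \<circ> H \<epsilon>)"
      using c(1) by (simp add: mult.assoc[symmetric] ennreal_mult[symmetric])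
    ultimately show ?thesis by simp
  qed
  show ?thesis
    apply (rule bexI[of _ "iv \<beta>"])
     apply (rule exI[of _ "1/c"])
    using main c(1) ivE[OF b(1)] by auto
qed

end

lemma holder_nn:
  fixes f g :: "'a \<Rightarrow> real" and p q A G :: real
  assumes pq: "p > 1" "q > 1" "1/p + 1/q = 1"
    and fm: "f \<in> borel_measurable M" and gm: "g \<in> borel_measurable M"
    and f0: "\<And>x. 0 \<le> f x" and g0: "\<And>x. 0 \<le> g x"
    and A: "(\<integral>\<^sup>+x. ennreal (f x powr p) \<partial>M) = ennreal A" "0 \<le> A"
    and G: "(\<integral>\<^sup>+x. ennreal (g x powr q) \<partial>M) = ennreal G" "0 \<le> G"
  shows "(\<integral>\<^sup>+x. ennreal (f x * g x) \<partial>M) \<le> ennreal (A powr (1/p) * G powr (1/q))"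
proof (cases "A = 0 \<or> G = 0")
  case True
  have "AE x in M. f x * g x = 0"
  proof (cases "A = 0")
    case True
    have "(\<integral>\<^sup>+x. ennreal (f x powr p) \<partial>M) = 0" using A True by simp
    then have "AE x in M. ennreal (f x powr p) = 0"
      by (subst (asm) nn_integral_0_iff_AE) (use fm in measurable)
    then show ?thesis by eventually_elim (use f0 in auto)
  next
    case False
    then have G0: "G = 0" using \<open>A = 0 \<or> G = 0\<close> by simp
    have "(\<integral>\<^sup>+x. ennreal (g x powr q) \<partial>M) = 0" using G G0 by simp
    then have "AE x in M. ennreal (g x powr q) = 0"
      by (subst (asm) nn_integral_0_iff_AE) (use gm in measurable)
    then show ?thesis by eventually_elim (use g0 in auto)
  qed
  then have "(\<integral>\<^sup>+x. ennreal (f x * g x) \<partial>M) = (\<integral>\<^sup>+x. 0 \<partial>M)"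
    by (intro nn_integral_cong_AE) auto
  then show ?thesis by simp
next
  case False
  then have Apos: "A > 0" and Gpos: "G > 0" using A(2) G(2) by auto
  define a where "a = A powr (1/p)"
  define b where "b = G powr (1/q)"
  have apos: "a > 0" and bpos: "b > 0" using Apos Gpos by (auto simp: a_def b_def)
  have ap: "a powr p = A" using Apos pq(1) by (simp add: a_def powr_powr)
  have bq: "b powr q = G" using Gpos pq(2) by (simp add: b_def powr_powr)
  have pt: "f x * g x \<le> (a * b / (A * p)) * f x powr p + (a * b / (G * q)) * g x powr q" for x
  proof -
    have "(f x / a) * (g x / b) \<le> (f x / a) powr p / p + (g x / b) powr q / q"
      using Youngs_inequality[OF pq, of "f x / a" "g x / b"] f0 g0 apos bpos by simp
    also have "\<dots> = f x powr p / (A * p) + g x powr q / (G * q)"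
      by (simp add: powr_divide ap bq)
    finally have "f x * g x / (a * b) \<le> f x powr p / (A * p) + g x powr q / (G * q)"
      by (simp add: field_simps)
    then have "f x * g x \<le> (a * b) * (f x powr p / (A * p) + g x powr q / (G * q))"
      using apos bpos by (simp add: pos_divide_le_eq mult.commute)
    then show ?thesis by (simp add: field_simps)
  qed
  have c1: "0 \<le> a * b / (A * p)" and c2: "0 \<le> a * b / (G * q)"
    using apos bpos Apos Gpos pq by auto
  have "(\<integral>\<^sup>+x. ennreal (f x * g x) \<partial>M) \<le>
        (\<integral>\<^sup>+x. ennreal (a * b / (A * p)) * ennreal (f x powr p) + ennreal (a * b / (G * q)) * ennreal (g x powr q) \<partial>M)"
  proof (intro nn_integral_mono)
    fix x
    have "ennreal (f x * g x) \<le> ennreal ((a * b / (A * p)) * f x powr p + (a * b / (G * q)) * g x powr q)"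
      by (rule ennreal_leI) (rule pt)
    also have "\<dots> = ennreal (a * b / (A * p)) * ennreal (f x powr p) + ennreal (a * b / (G * q)) * ennreal (g x powr q)"
      using ennreal_plus[OF mult_nonneg_nonneg[OF c1 powr_ge_zero] mult_nonneg_nonneg[OF c2 powr_ge_zero]]
        ennreal_mult[OF c1 powr_ge_zero] ennreal_mult[OF c2 powr_ge_zero] by metis
    finally show "ennreal (f x * g x) \<le> ennreal (a * b / (A * p)) * ennreal (f x powr p) + ennreal (a * b / (G * q)) * ennreal (g x powr q)" .
  qed
  also have "\<dots> = ennreal (a * b / (A * p)) * (\<integral>\<^sup>+x. ennreal (f x powr p) \<partial>M) + ennreal (a * b / (G * q)) * (\<integral>\<^sup>+x. ennreal (g x powr q) \<partial>M)"
    using fm gm by (simp add: nn_integral_add nn_integral_cmult)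
  also have "\<dots> = ennreal (a * b / (A * p) * A + a * b / (G * q) * G)"
  proof -
    have "ennreal (a * b / (A * p)) * ennreal A = ennreal (a * b / (A * p) * A)"
      using ennreal_mult[OF c1 A(2), symmetric] .
    moreover have "ennreal (a * b / (G * q)) * ennreal G = ennreal (a * b / (G * q) * G)"
      using ennreal_mult[OF c2 G(2), symmetric] .
    moreover have "ennreal (a * b / (A * p) * A) + ennreal (a * b / (G * q) * G) = ennreal (a * b / (A * p) * A + a * b / (G * q) * G)"
      using ennreal_plus[OF mult_nonneg_nonneg[OF c1 A(2)] mult_nonneg_nonneg[OF c2 G(2)], symmetric] .
    ultimately show ?thesis using A(1) G(1) by metis
  qed
  also have "a * b / (A * p) * A + a * b / (G * q) * G = a * b * (1/p + 1/q)"
    using Apos Gpos by (simp add: field_simps)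
  also have "\<dots> = A powr (1/p) * G powr (1/q)" using pq(3) by (simp add: a_def b_def)
  finally show ?thesis .
qed


lemma ind_ennreal: "0 \<le> y \<Longrightarrow> indicator S x * ennreal y = ennreal (indicator S x * y)"
  by (cases "x \<in> S") auto

lemma HB:
  fixes M :: "'a measure" and g :: "'a \<Rightarrow> complex"
  assumes p1: "1 \<le> p" and \<Omega>: "\<Omega> \<in> sets M" and dt: "dual_test M p \<Omega> g"
  shows "\<exists>C\<ge>0. \<forall>f. f \<in> borel_measurable M \<longrightarrow> lp_integral M p \<Omega> f < \<infinity> \<longrightarrow>
     (\<integral>\<^sup>+x. indicator \<Omega> x * ennreal (cmod (f x * g x)) \<partial>M) \<le> ennreal (C * enn2real (lp_integral M p \<Omega> f) powr (1/p))"
proof (cases "p = 1")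
  case True
  from dt True obtain C0 where gm: "g \<in> borel_measurable M" and C0: "AE x in M. x \<in> \<Omega> \<longrightarrow> cmod (g x) \<le> C0"
    unfolding dual_test_def by auto
  define C where "C = max C0 0"
  have "(\<integral>\<^sup>+x. indicator \<Omega> x * ennreal (cmod (f x * g x)) \<partial>M) \<le> ennreal (C * enn2real (lp_integral M p \<Omega> f) powr (1/p))"
    if fm: "f \<in> borel_measurable M" and fin: "lp_integral M p \<Omega> f < \<infinity>" for f
  proof -
    have lp1: "lp_integral M p \<Omega> f = (\<integral>\<^sup>+x. indicator \<Omega> x * ennreal (cmod (f x)) \<partial>M)"
      unfolding lp_integral_def True by simp
    have "(\<integral>\<^sup>+x. indicator \<Omega> x * ennreal (cmod (f x * g x)) \<partial>M) \<le> (\<integral>\<^sup>+x. ennreal C * (indicator \<Omega> x * ennreal (cmod (f x))) \<partial>M)"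
    proof (rule nn_integral_mono_AE)
      show "AE x in M. indicator \<Omega> x * ennreal (cmod (f x * g x)) \<le> ennreal C * (indicator \<Omega> x * ennreal (cmod (f x)))"
        using C0
      proof eventually_elim
        case (elim x)
        show ?case
        proof (cases "x \<in> \<Omega>")
          case True
          then have "cmod (g x) \<le> C" using elim C_def by auto
          then have "cmod (f x * g x) \<le> C * cmod (f x)"
            by (simp add: norm_mult mult.commute[of C] mult_left_mono)
          then have "ennreal (cmod (f x * g x)) \<le> ennreal (C * cmod (f x))" by (rule ennreal_leI)
          then show ?thesis using True C_def by (simp add: ennreal_mult)
        qed simp
      qed
    qed
    also have "\<dots> = ennreal C * lp_integral M p \<Omega> f"
      unfolding lp1 by (rule nn_integral_cmult) (use fm \<Omega> in measurable)
    also have "\<dots> = ennreal C * ennreal (enn2real (lp_integral M p \<Omega> f))"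
      using fin by simp
    also have "\<dots> = ennreal (C * enn2real (lp_integral M p \<Omega> f) powr (1/p))"
      using True C_def by (simp add: ennreal_mult)
    finally show ?thesis .
  qed
  moreover have "C \<ge> 0" by (simp add: C_def)
  ultimately show ?thesis by blast
next
  case False
  then have p: "p > 1" using p1 by simp
  define q where "q = p / (p - 1)"
  have q: "q > 1" "1/p + 1/q = 1" using p by (auto simp: q_def field_simps)
  from dt False have gm: "g \<in> borel_measurable M" and gfin: "lp_integral M q \<Omega> g < \<infinity>"
    unfolding dual_test_def q_def by auto
  define G where "G = enn2real (lp_integral M q \<Omega> g)"
  have Gp: "(\<integral>\<^sup>+x. ennreal ((indicator \<Omega> x * cmod (g x)) powr q) \<partial>M) = ennreal G" "0 \<le> G"
  proof -
    have "(\<integral>\<^sup>+x. ennreal ((indicator \<Omega> x * cmod (g x)) powr q) \<partial>M) = lp_integral M q \<Omega> g"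
      unfolding lp_integral_def by (intro nn_integral_cong) (auto simp: indicator_def)
    then show "(\<integral>\<^sup>+x. ennreal ((indicator \<Omega> x * cmod (g x)) powr q) \<partial>M) = ennreal G"
      using gfin by (simp add: G_def)
  qed (simp add: G_def)
  have "(\<integral>\<^sup>+x. indicator \<Omega> x * ennreal (cmod (f x * g x)) \<partial>M) \<le> ennreal (G powr (1/q) * enn2real (lp_integral M p \<Omega> f) powr (1/p))"
    if fm: "f \<in> borel_measurable M" and fin: "lp_integral M p \<Omega> f < \<infinity>" for f
  proof -
    define A where "A = enn2real (lp_integral M p \<Omega> f)"
    have Ap: "(\<integral>\<^sup>+x. ennreal ((indicator \<Omega> x * cmod (f x)) powr p) \<partial>M) = ennreal A" "0 \<le> A"
    proof -
      have "(\<integral>\<^sup>+x. ennreal ((indicator \<Omega> x * cmod (f x)) powr p) \<partial>M) = lp_integral M p \<Omega> f"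
        unfolding lp_integral_def by (intro nn_integral_cong) (auto simp: indicator_def)
      then show "(\<integral>\<^sup>+x. ennreal ((indicator \<Omega> x * cmod (f x)) powr p) \<partial>M) = ennreal A"
        using fin by (simp add: A_def)
    qed (simp add: A_def)
    have "(\<integral>\<^sup>+x. indicator \<Omega> x * ennreal (cmod (f x * g x)) \<partial>M) =
          (\<integral>\<^sup>+x. ennreal ((indicator \<Omega> x * cmod (f x)) * (indicator \<Omega> x * cmod (g x))) \<partial>M)"
      by (intro nn_integral_cong) (auto simp: indicator_def norm_mult)
    also have "\<dots> \<le> ennreal (A powr (1/p) * G powr (1/q))"
      by (rule holder_nn[OF p q(1) q(2) _ _ _ _ Ap Gp]) (use fm gm \<Omega> in auto)
    finally show ?thesis by (simp add: A_def mult.commute)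
  qed
  moreover have "G powr (1/q) \<ge> 0" by simp
  ultimately show ?thesis by blast
qed

lemma HB2:
  fixes M :: "'a measure" and g :: "'a \<Rightarrow> complex"
  assumes p1: "1 \<le> p" and \<Omega>: "\<Omega> \<in> sets M" and dt: "dual_test M p \<Omega> g"
  shows "\<exists>C\<ge>0. \<forall>f. f \<in> borel_measurable M \<longrightarrow> lp_integral M p \<Omega> f < \<infinity> \<longrightarrow>
     set_integrable M \<Omega> (\<lambda>x. f x * g x) \<and>
     cmod (set_lebesgue_integral M \<Omega> (\<lambda>x. f x * g x)) \<le> C * enn2real (lp_integral M p \<Omega> f) powr (1/p)"
proof -
  obtain C where C: "C \<ge> 0" "\<And>f. f \<in> borel_measurable M \<Longrightarrow> lp_integral M p \<Omega> f < \<infinity> \<Longrightarrow>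
     (\<integral>\<^sup>+x. indicator \<Omega> x * ennreal (cmod (f x * g x)) \<partial>M) \<le> ennreal (C * enn2real (lp_integral M p \<Omega> f) powr (1/p))"
    using HB[OF assms] by blast
  have gm: "g \<in> borel_measurable M" using dt unfolding dual_test_def by simp
  have "set_integrable M \<Omega> (\<lambda>x. f x * g x) \<and>
     cmod (set_lebesgue_integral M \<Omega> (\<lambda>x. f x * g x)) \<le> C * enn2real (lp_integral M p \<Omega> f) powr (1/p)"
    if fm: "f \<in> borel_measurable M" and fin: "lp_integral M p \<Omega> f < \<infinity>" for f
  proof -
    define h where "h x = indicator \<Omega> x *\<^sub>R (f x * g x)" for x
    have hm: "h \<in> borel_measurable M" unfolding h_def using fm gm \<Omega> by measurable
    have nh: "(\<integral>\<^sup>+x. ennreal (norm (h x)) \<partial>M) = (\<integral>\<^sup>+x. indicator \<Omega> x * ennreal (cmod (f x * g x)) \<partial>M)"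
      unfolding h_def by (intro nn_integral_cong) (auto simp: indicator_def)
    have bnd: "(\<integral>\<^sup>+x. ennreal (norm (h x)) \<partial>M) \<le> ennreal (C * enn2real (lp_integral M p \<Omega> f) powr (1/p))"
      using nh C(2)[OF fm fin] by simp
    have hi: "integrable M h"
      using hm bnd by (intro integrableI_bounded) (auto simp: top_unique less_top[symmetric] dest: order.strict_trans1[OF _ ennreal_less_top])
    have "ennreal (norm (integral\<^sup>L M h)) \<le> ennreal (C * enn2real (lp_integral M p \<Omega> f) powr (1/p))"
      using integral_norm_bound_ennreal[OF hi] bnd by (rule order.trans)
    then have "norm (integral\<^sup>L M h) \<le> C * enn2real (lp_integral M p \<Omega> f) powr (1/p)"
      using C(1) by (simp add: ennreal_le_iff)
    then show ?thesis using hi unfolding h_def set_integrable_def set_lebesgue_integral_def by simp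
  qed
  then show ?thesis using C(1) by blast
qed


lemma abstract_limit:
  fixes s :: "'b \<Rightarrow> complex" and F :: "'b filter" and T :: "'c set" and m :: "'c \<Rightarrow> complex" and d :: "'c \<Rightarrow> real"
  assumes F: "\<not> trivial_limit F"
    and dense: "\<And>\<delta>. \<delta> > 0 \<Longrightarrow> \<exists>v\<in>T. d v < \<delta>"
    and ev: "\<And>v \<eta>. v \<in> T \<Longrightarrow> \<eta> > 0 \<Longrightarrow> eventually (\<lambda>\<epsilon>. cmod (s \<epsilon> - m v) \<le> d v + \<eta>) F"
  shows "\<exists>lim0. (s \<longlongrightarrow> lim0) F \<and> (\<forall>v\<in>T. cmod (lim0 - m v) \<le> d v)"
proof -
  have Fnb: "F \<noteq> bot" using F by (simp add: trivial_limit_def)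
  have "\<forall>n. \<exists>v\<in>T. d v < inverse (real (Suc n))" using dense by simp
  then obtain V where V: "\<And>n. V n \<in> T" "\<And>n. d (V n) < inverse (real (Suc n))" by metis
  define X where "X n = m (V n)" for n
  have pair: "cmod (X n - X k) \<le> d (V n) + d (V k)" for n k
  proof (rule field_le_epsilon)
    fix \<eta> :: real assume "\<eta> > 0"
    have "eventually (\<lambda>\<epsilon>. cmod (s \<epsilon> - m (V n)) \<le> d (V n) + \<eta>/2 \<and> cmod (s \<epsilon> - m (V k)) \<le> d (V k) + \<eta>/2) F"
      using ev[OF V(1), of "\<eta>/2" n] ev[OF V(1), of "\<eta>/2" k] \<open>\<eta> > 0\<close> by (auto intro: eventually_conj)
    then obtain \<epsilon> where \<epsilon>: "cmod (s \<epsilon> - m (V n)) \<le> d (V n) + \<eta>/2" "cmod (s \<epsilon> - m (V k)) \<le> d (V k) + \<eta>/2"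
      using eventually_happens'[OF Fnb] by blast
    have "X n - X k = (s \<epsilon> - m (V k)) - (s \<epsilon> - m (V n))" by (simp add: X_def)
    then have "cmod (X n - X k) \<le> cmod (s \<epsilon> - m (V k)) + cmod (s \<epsilon> - m (V n))"
      by (metis norm_triangle_ineq4)
    then show "cmod (X n - X k) \<le> d (V n) + d (V k) + \<eta>" using \<epsilon> by simp
  qed
  have pair2: "cmod (X n - X k) \<le> inverse (real (Suc n)) + inverse (real (Suc k))" for n k
    using pair[of n k] V(2)[of n] V(2)[of k] by simp
  have "Cauchy X"
  proof (rule CauchyI)
    fix e :: real assume "e > 0"
    then obtain N where N: "inverse (real (Suc N)) < e/2" using reals_Archimedean[of "e/2"] by auto
    have "\<forall>a\<ge>N. \<forall>b\<ge>N. cmod (X a - X b) < e"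
    proof (intro allI impI)
      fix a b assume "N \<le> a" "N \<le> b"
      then have "inverse (real (Suc a)) \<le> inverse (real (Suc N))" "inverse (real (Suc b)) \<le> inverse (real (Suc N))"
        by (auto intro!: le_imp_inverse_le)
      then show "cmod (X a - X b) < e" using pair2[of a b] N by linarith
    qed
    then show "\<exists>M. \<forall>m\<ge>M. \<forall>n\<ge>M. cmod (X m - X n) < e" by blast
  qed
  then obtain lim0 where l: "X \<longlonglongrightarrow> lim0" using Cauchy_convergent_iff convergent_def by blast
  have Xl: "cmod (X n - lim0) \<le> inverse (real (Suc n))" for n
  proof -
    have "(\<lambda>k. cmod (X n - X k)) \<longlonglongrightarrow> cmod (X n - lim0)" by (intro tendsto_intros l)
    moreover have "(\<lambda>k. inverse (real (Suc n)) + inverse (real (Suc k))) \<longlonglongrightarrow> inverse (real (Suc n)) + 0"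
      by (intro tendsto_intros LIMSEQ_inverse_real_of_nat)
    ultimately show ?thesis using pair2[of n] by (intro LIMSEQ_le) auto
  qed
  have conv: "(s \<longlongrightarrow> lim0) F"
  proof (rule tendstoI)
    fix \<eta> :: real assume "\<eta> > 0"
    then obtain n where n: "inverse (real (Suc n)) < \<eta>/3" using reals_Archimedean[of "\<eta>/3"] by auto
    have "eventually (\<lambda>\<epsilon>. cmod (s \<epsilon> - m (V n)) \<le> d (V n) + inverse (real (Suc n))) F"
      by (rule ev[OF V(1)]) simp
    then show "eventually (\<lambda>\<epsilon>. dist (s \<epsilon>) lim0 < \<eta>) F"
    proof eventually_elim
      case (elim \<epsilon>)
      have "s \<epsilon> - lim0 = (s \<epsilon> - m (V n)) + (X n - lim0)" by (simp add: X_def)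
      then have "cmod (s \<epsilon> - lim0) \<le> cmod (s \<epsilon> - m (V n)) + cmod (X n - lim0)"
        by (metis norm_triangle_ineq)
      then show ?case using elim Xl[of n] V(2)[of n] n by (simp add: dist_norm)
    qed
  qed
  have bnd: "cmod (lim0 - m v) \<le> d v" if v: "v \<in> T" for v
  proof (rule field_le_epsilon)
    fix \<eta> :: real assume "\<eta> > 0"
    have "((\<lambda>\<epsilon>. cmod (s \<epsilon> - m v)) \<longlongrightarrow> cmod (lim0 - m v)) F" by (intro tendsto_intros conv)
    then show "cmod (lim0 - m v) \<le> d v + \<eta>"
      using tendsto_upperbound ev[OF v \<open>\<eta> > 0\<close>] F by blast
  qed
  show ?thesis using conv bnd by blast
qed


lemma SUP_mono_on: "(\<And>x. x \<in> A \<Longrightarrow> f x \<le> g x) \<Longrightarrow> (SUP x\<in>A. f x) \<le> (SUP x\<in>A. (g x :: 'b::complete_lattice))"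
  by (rule SUP_mono) auto

context hset
begin

abbreviation "XI \<equiv> Xi E e H lam p"
abbreviation "XN \<equiv> Xi_norm E e H lam p B"
abbreviation "PI \<equiv> Pi_inf E H lam"
abbreviation "FX \<equiv> frakX E e H lam p B"
abbreviation "SUPB u \<equiv> (SUP \<epsilon>\<in>{\<epsilon>\<in>E. \<epsilon> \<le> e}. lp_integral lam p B (u \<circ> H \<epsilon>))"

lemma Ksets: "compact K \<Longrightarrow> K \<in> sets lam"
  using borel_closed[OF compact_imp_closed] lam_sets by simp

lemma comp_meas: "u \<in> borel_measurable lam \<Longrightarrow> \<epsilon> \<in> E \<Longrightarrow> (\<lambda>x. u (H \<epsilon> x)) \<in> borel_measurable lam"
proof -
  assume a: "u \<in> borel_measurable lam" "\<epsilon> \<in> E"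
  have ub: "u \<in> borel_measurable borel" using meas_lam_borel[OF a(1)] .
  show ?thesis using measurable_compose[OF Hmeas_lam[OF a(2)] ub] .
qed

lemma comp_meas': "u \<in> borel_measurable lam \<Longrightarrow> \<epsilon> \<in> E \<Longrightarrow> (u \<circ> H \<epsilon>) \<in> borel_measurable lam"
  using comp_meas by (simp add: o_def)

lemma lp_mono_set: "A \<subseteq> A' \<Longrightarrow> lp_integral lam p A f \<le> lp_integral lam p A' f"
  unfolding lp_integral_def by (intro nn_integral_mono) (auto simp: indicator_def)

lemma Xi_SUPB: assumes "u \<in> XI" shows "SUPB u < \<infinity>"
proof -
  have "SUPB u \<le> (SUP \<epsilon>\<in>{\<epsilon>\<in>E. \<epsilon> \<le> e}. lp_integral lam p (closure B) (u \<circ> H \<epsilon>))"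
    by (intro SUP_mono) (use lp_mono_set[OF closure_subset] in blast)
  also have "\<dots> < \<infinity>" using assms Bcl unfolding Xi_def by blast
  finally show ?thesis .
qed

lemma XN_pow: assumes "u \<in> XI" shows "SUPB u = ennreal (XN u powr p)"
proof -
  have "XN u powr p = enn2real (SUPB u)"
    unfolding Xi_norm_def using p1 by (simp add: powr_powr)
  then show ?thesis using Xi_SUPB[OF assms] by simp
qed

lemma XN_nonneg: "XN u \<ge> 0" unfolding Xi_norm_def by simp

lemma lp_bounded:
  assumes "\<And>x. cmod (v x) \<le> Mv" and "A \<in> sets lam"
  shows "lp_integral lam p A v \<le> ennreal (Mv powr p) * emeasure lam A"
proof -
  have "lp_integral lam p A v \<le> (\<integral>\<^sup>+x. ennreal (Mv powr p) * indicator A x \<partial>lam)"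
    unfolding lp_integral_def
  proof (intro nn_integral_mono)
    fix x
    have "cmod (v x) powr p \<le> Mv powr p" using assms(1)[of x] p1 by (intro powr_mono2) auto
    then show "indicator A x * ennreal (cmod (v x) powr p) \<le> ennreal (Mv powr p) * indicator A x"
      by (cases "x \<in> A") (auto intro: ennreal_leI)
  qed
  also have "\<dots> = ennreal (Mv powr p) * emeasure lam A" using nn_integral_cmult_indicator[OF assms(2)] .
  finally show ?thesis .
qed

lemma pw_diff: "cmod (a - b) powr p \<le> 2 powr p * (cmod a powr p + cmod b powr p)"
proof -
  have "cmod (a - b) \<le> 2 * max (cmod a) (cmod b)" using norm_triangle_ineq4[of a b] by linarith
  then have "cmod (a - b) powr p \<le> (2 * max (cmod a) (cmod b)) powr p" using p1 by (intro powr_mono2) auto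
  also have "\<dots> = 2 powr p * max (cmod a) (cmod b) powr p" by (simp add: powr_mult)
  also have "max (cmod a) (cmod b) powr p \<le> cmod a powr p + cmod b powr p"
    by (cases "cmod a \<le> cmod b") (auto simp: max_def)
  then have "2 powr p * max (cmod a) (cmod b) powr p \<le> 2 powr p * (cmod a powr p + cmod b powr p)"
    by (intro mult_left_mono) auto
  finally show ?thesis .
qed

lemma lp_diff:
  assumes "f \<in> borel_measurable lam" "g \<in> borel_measurable lam" "A \<in> sets lam"
  shows "lp_integral lam p A (\<lambda>x. f x - g x) \<le> ennreal (2 powr p) * (lp_integral lam p A f + lp_integral lam p A g)"
proof -
  have "lp_integral lam p A (\<lambda>x. f x - g x) \<le>
     (\<integral>\<^sup>+x. ennreal (2 powr p) * (indicator A x * ennreal (cmod (f x) powr p) + indicator A x * ennreal (cmod (g x) powr p)) \<partial>lam)"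
    unfolding lp_integral_def
  proof (intro nn_integral_mono)
    fix x
    have "ennreal (cmod (f x - g x) powr p) \<le> ennreal (2 powr p * (cmod (f x) powr p + cmod (g x) powr p))"
      by (rule ennreal_leI) (rule pw_diff)
    also have "\<dots> = ennreal (2 powr p) * (ennreal (cmod (f x) powr p) + ennreal (cmod (g x) powr p))"
      by (simp add: ennreal_mult ennreal_plus)
    finally show "indicator A x * ennreal (cmod (f x - g x) powr p) \<le> ennreal (2 powr p) * (indicator A x * ennreal (cmod (f x) powr p) + indicator A x * ennreal (cmod (g x) powr p))"
      by (cases "x \<in> A") auto
  qed
  also have "\<dots> = ennreal (2 powr p) * (lp_integral lam p A f + lp_integral lam p A g)"
  proof -
    have m1: "(\<lambda>x. indicator A x * ennreal (cmod (f x) powr p)) \<in> borel_measurable lam" using assms by measurable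
    have m2: "(\<lambda>x. indicator A x * ennreal (cmod (g x) powr p)) \<in> borel_measurable lam" using assms by measurable
    show ?thesis unfolding lp_integral_def
      using nn_integral_add[OF m1 m2] nn_integral_cmult[OF borel_measurable_add[OF m1 m2], of "ennreal (2 powr p)"] by simp
  qed
  finally show ?thesis .
qed

lemma Xi_diff:
  assumes u: "u \<in> XI" and v: "v \<in> XI"
  shows "(\<lambda>x. u x - v x) \<in> XI"
proof -
  have um: "u \<in> borel_measurable lam" and vm: "v \<in> borel_measurable lam"
    using u v unfolding Xi_def Lp_loc_def by auto
  have m: "(\<lambda>x. u x - v x) \<in> borel_measurable lam" using um vm by measurable
  have loc: "lp_integral lam p K (\<lambda>x. u x - v x) < \<infinity>" if K: "compact K" for K
  proof -
    have "K \<in> sets lam" using Ksets[OF K] .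
    then have "lp_integral lam p K (\<lambda>x. u x - v x) \<le> ennreal (2 powr p) * (lp_integral lam p K u + lp_integral lam p K v)"
      by (rule lp_diff[OF um vm])
    also have "\<dots> < \<infinity>" using u v K unfolding Xi_def Lp_loc_def by (simp add: ennreal_mult_less_top)
    finally show ?thesis .
  qed
  have sup: "(SUP \<epsilon>\<in>{\<epsilon>\<in>E. \<epsilon> \<le> e}. lp_integral lam p K ((\<lambda>x. u x - v x) \<circ> H \<epsilon>)) < \<infinity>"
    if K: "compact K" for K
  proof -
    have Ks: "K \<in> sets lam" using Ksets[OF K] .
    have "(SUP \<epsilon>\<in>{\<epsilon>\<in>E. \<epsilon> \<le> e}. lp_integral lam p K ((\<lambda>x. u x - v x) \<circ> H \<epsilon>)) \<le>
       (SUP \<epsilon>\<in>{\<epsilon>\<in>E. \<epsilon> \<le> e}. ennreal (2 powr p) * (lp_integral lam p K (u \<circ> H \<epsilon>) + lp_integral lam p K (v \<circ> H \<epsilon>)))"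
    proof (rule SUP_mono_on)
      fix \<epsilon> assume "\<epsilon> \<in> {\<epsilon>\<in>E. \<epsilon> \<le> e}"
      then have eE: "\<epsilon> \<in> E" by simp
      have "(\<lambda>x. u x - v x) \<circ> H \<epsilon> = (\<lambda>x. (u \<circ> H \<epsilon>) x - (v \<circ> H \<epsilon>) x)" by auto
      then show "lp_integral lam p K ((\<lambda>x. u x - v x) \<circ> H \<epsilon>) \<le> ennreal (2 powr p) * (lp_integral lam p K (u \<circ> H \<epsilon>) + lp_integral lam p K (v \<circ> H \<epsilon>))"
        using lp_diff[OF comp_meas'[OF um eE] comp_meas'[OF vm eE] Ks] by simp
    qed
    also have "\<dots> \<le> ennreal (2 powr p) * ((SUP \<epsilon>\<in>{\<epsilon>\<in>E. \<epsilon> \<le> e}. lp_integral lam p K (u \<circ> H \<epsilon>)) + (SUP \<epsilon>\<in>{\<epsilon>\<in>E. \<epsilon> \<le> e}. lp_integral lam p K (v \<circ> H \<epsilon>)))"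
      by (intro SUP_least mult_left_mono add_mono SUP_upper) auto
    also have "\<dots> < \<infinity>" using u v K unfolding Xi_def by (simp add: ennreal_mult_less_top)
    finally show ?thesis .
  qed
  show ?thesis unfolding Xi_def Lp_loc_def using m loc sup by blast
qed

lemma BC_bounded: "u \<in> BC \<Longrightarrow> \<exists>Mu\<ge>0. \<forall>x. cmod (u x) \<le> Mu"
proof -
  assume "u \<in> BC"
  then have "bounded (range u)" unfolding BC_def by simp
  then obtain a where a: "\<forall>y\<in>range u. norm y \<le> a" unfolding bounded_iff by blast
  have "\<forall>x. cmod (u x) \<le> max a 0" using a by (simp add: le_max_iff_disj)
  then show ?thesis by (intro exI[of _ "max a 0"]) simp
qed

lemma BC_meas: "u \<in> BC \<Longrightarrow> u \<in> borel_measurable lam"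
  unfolding BC_def using borel_measurable_continuous_onI bl_meas by blast

lemma PI_Xi: assumes "u \<in> PI" shows "u \<in> XI"
proof -
  have uBC: "u \<in> BC" using assms by (simp add: Pi_inf_def)
  obtain Mu where Mu: "Mu \<ge> 0" "\<And>x. cmod (u x) \<le> Mu" using BC_bounded[OF uBC] by blast
  have um: "u \<in> borel_measurable lam" using BC_meas[OF uBC] .
  have fin: "ennreal (Mu powr p) * emeasure lam K < \<infinity>" if "compact K" for K
    using lam_compact[OF that] by (simp add: ennreal_mult_less_top)
  have "lp_integral lam p K u < \<infinity>" if K: "compact K" for K
    using lp_bounded[of u Mu K, OF Mu(2) Ksets[OF K]] fin[OF K] by (simp add: order.strict_trans1)
  moreover have "(SUP \<epsilon>\<in>{\<epsilon>\<in>E. \<epsilon> \<le> e}. lp_integral lam p K (u \<circ> H \<epsilon>)) < \<infinity>" if K: "compact K" for K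
  proof -
    have "(SUP \<epsilon>\<in>{\<epsilon>\<in>E. \<epsilon> \<le> e}. lp_integral lam p K (u \<circ> H \<epsilon>)) \<le> ennreal (Mu powr p) * emeasure lam K"
      by (intro SUP_least lp_bounded) (use Mu(2) Ksets[OF K] in auto)
    then show ?thesis using fin[OF K] by (simp add: order.strict_trans1)
  qed
  ultimately show ?thesis unfolding Xi_def Lp_loc_def using um by blast
qed

end

context hset
begin

definition "LB = measure lam B"

lemma LB_pos: "LB > 0"
  using Bpos Bfin unfolding LB_def by (simp add: measure_def enn2real_positive_iff)

lemma IB: "set_lebesgue_integral lam B (\<lambda>x. 1::complex) = complex_of_real LB"
  using set_integral_const[OF Bsets, of "1::complex"] Bfin unfolding LB_def by (simp add: scaleR_conv_of_real)

lemma ws_unique: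
  assumes "weakstar_mean E H lam u c" "weakstar_mean E H lam u d" shows "c = d"
proof -
  define g0 where "g0 x = complex_of_real (indicator B x)" for x
  have gi: "integrable lam g0" unfolding g0_def using Bsets Bfin by simp
  have ig: "integral\<^sup>L lam g0 = complex_of_real LB"
    unfolding g0_def LB_def using lam_space by simp
  have "((\<lambda>\<epsilon>. \<integral>x. u (H \<epsilon> x) * g0 x \<partial>lam) \<longlongrightarrow> c * integral\<^sup>L lam g0) (theta_filter E)"
    using assms(1) gi unfolding weakstar_mean_def by blast
  moreover have "((\<lambda>\<epsilon>. \<integral>x. u (H \<epsilon> x) * g0 x \<partial>lam) \<longlongrightarrow> d * integral\<^sup>L lam g0) (theta_filter E)"
    using assms(2) gi unfolding weakstar_mean_def by blast
  ultimately have "c * integral\<^sup>L lam g0 = d * integral\<^sup>L lam g0"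
    using tendsto_unique theta_nontriv by blast
  then show ?thesis using ig LB_pos by simp
qed

lemma mean_eq: "weakstar_mean E H lam u c \<Longrightarrow> mean_value E H lam u = c"
  unfolding mean_value_def using ws_unique by blast

lemma ws_integrable:
  assumes u: "u \<in> BC" and g: "integrable lam g" and eE: "\<epsilon> \<in> E"
  shows "integrable lam (\<lambda>x. u (H \<epsilon> x) * g x)"
proof -
  obtain Mu where Mu: "Mu \<ge> 0" "\<And>x. cmod (u x) \<le> Mu" using BC_bounded[OF u] by blast
  have gm: "g \<in> borel_measurable lam" using g by simp
  show ?thesis
  proof (rule Bochner_Integration.integrable_bound[of _ "\<lambda>x. complex_of_real Mu * g x"])
    show "integrable lam (\<lambda>x. complex_of_real Mu * g x)" using g by simp
    show "(\<lambda>x. u (H \<epsilon> x) * g x) \<in> borel_measurable lam"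
      using comp_meas[OF BC_meas[OF u] eE] gm by measurable
    show "AE x in lam. cmod (u (H \<epsilon> x) * g x) \<le> cmod (complex_of_real Mu * g x)"
      using Mu by (auto simp: norm_mult intro!: mult_right_mono)
  qed
qed

lemma PI_diff:
  assumes u: "u \<in> PI" and v: "v \<in> PI"
  shows "(\<lambda>x. u x - v x) \<in> PI \<and> mean_value E H lam (\<lambda>x. u x - v x) = mean_value E H lam u - mean_value E H lam v"
proof -
  have uB: "u \<in> BC" and vB: "v \<in> BC" using u v by (auto simp: Pi_inf_def)
  obtain c where c: "weakstar_mean E H lam u c" using u by (auto simp: Pi_inf_def)
  obtain d where d: "weakstar_mean E H lam v d" using v by (auto simp: Pi_inf_def)
  obtain Mu where Mu: "\<And>x. cmod (u x) \<le> Mu" using BC_bounded[OF uB] by blast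
  obtain Mv where Mv: "\<And>x. cmod (v x) \<le> Mv" using BC_bounded[OF vB] by blast
  have bc: "(\<lambda>x. u x - v x) \<in> BC"
  proof -
    have "continuous_on UNIV (\<lambda>x. u x - v x)" using uB vB unfolding BC_def by (auto intro: continuous_on_diff)
    moreover have "\<forall>y\<in>range (\<lambda>x. u x - v x). norm y \<le> Mu + Mv"
    proof
      fix y assume "y \<in> range (\<lambda>x. u x - v x)"
      then obtain x where "y = u x - v x" by blast
      then show "norm y \<le> Mu + Mv" using norm_triangle_ineq4[of "u x" "v x"] Mu[of x] Mv[of x] by simp
    qed
    then have "bounded (range (\<lambda>x. u x - v x))" unfolding bounded_iff by blast
    ultimately show ?thesis unfolding BC_def by simp
  qed
  have ws: "weakstar_mean E H lam (\<lambda>x. u x - v x) (c - d)"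
    unfolding weakstar_mean_def
  proof (intro allI impI)
    fix g :: "'a \<Rightarrow> complex" assume g: "integrable lam g"
    have l1: "((\<lambda>\<epsilon>. \<integral>x. u (H \<epsilon> x) * g x \<partial>lam) \<longlongrightarrow> c * integral\<^sup>L lam g) (theta_filter E)"
      using c g unfolding weakstar_mean_def by blast
    have l2: "((\<lambda>\<epsilon>. \<integral>x. v (H \<epsilon> x) * g x \<partial>lam) \<longlongrightarrow> d * integral\<^sup>L lam g) (theta_filter E)"
      using d g unfolding weakstar_mean_def by blast
    have ev: "eventually (\<lambda>\<epsilon>. (\<integral>x. u (H \<epsilon> x) * g x \<partial>lam) - (\<integral>x. v (H \<epsilon> x) * g x \<partial>lam) =
               (\<integral>x. (u (H \<epsilon> x) - v (H \<epsilon> x)) * g x \<partial>lam)) (theta_filter E)"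
      using eventually_theta_le[OF eE]
    proof eventually_elim
      case (elim \<epsilon>)
      then have "\<epsilon> \<in> E" by simp
      then show ?case
        using Bochner_Integration.integral_diff[OF ws_integrable[OF uB g \<open>\<epsilon> \<in> E\<close>] ws_integrable[OF vB g \<open>\<epsilon> \<in> E\<close>]]
        by (simp add: left_diff_distrib)
    qed
    have "((\<lambda>\<epsilon>. (\<integral>x. u (H \<epsilon> x) * g x \<partial>lam) - (\<integral>x. v (H \<epsilon> x) * g x \<partial>lam)) \<longlongrightarrow> (c - d) * integral\<^sup>L lam g) (theta_filter E)"
      using tendsto_diff[OF l1 l2] by (simp add: left_diff_distrib)
    then show "((\<lambda>\<epsilon>. \<integral>x. (u (H \<epsilon> x) - v (H \<epsilon> x)) * g x \<partial>lam) \<longlongrightarrow> (c - d) * integral\<^sup>L lam g) (theta_filter E)"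
      using tendsto_cong[OF ev] by simp
  qed
  have "(\<lambda>x. u x - v x) \<in> PI" using bc ws unfolding Pi_inf_def by blast
  moreover have "mean_value E H lam (\<lambda>x. u x - v x) = mean_value E H lam u - mean_value E H lam v"
    using mean_eq[OF ws] mean_eq[OF c] mean_eq[OF d] by simp
  ultimately show ?thesis by blast
qed

lemma PI_zero: "(\<lambda>x. 0) \<in> PI" "mean_value E H lam (\<lambda>x. 0) = 0"
proof -
  have ws: "weakstar_mean E H lam (\<lambda>x. 0) 0" unfolding weakstar_mean_def by simp
  have "(\<lambda>x. 0::complex) \<in> BC" unfolding BC_def by simp
  then show "(\<lambda>x. 0) \<in> PI" using ws unfolding Pi_inf_def by blast
  show "mean_value E H lam (\<lambda>x. 0) = 0" using mean_eq[OF ws] .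
qed

end

context hset
begin

lemma lp_fin:
  assumes u: "u \<in> XI" and K: "compact (closure \<Omega>)" and eps: "\<epsilon> \<in> E" "\<epsilon> \<le> e"
  shows "lp_integral lam p \<Omega> (\<lambda>x. u (H \<epsilon> x)) < \<infinity>"
proof -
  have "lp_integral lam p \<Omega> (\<lambda>x. u (H \<epsilon> x)) \<le> lp_integral lam p (closure \<Omega>) (u \<circ> H \<epsilon>)"
    using lp_mono_set[OF closure_subset, of \<Omega> "u \<circ> H \<epsilon>"] by (simp add: o_def)
  also have "\<dots> \<le> (SUP \<epsilon>\<in>{\<epsilon>\<in>E. \<epsilon> \<le> e}. lp_integral lam p (closure \<Omega>) (u \<circ> H \<epsilon>))"
    by (rule SUP_upper) (use eps in simp)
  also have "\<dots> < \<infinity>" using u K unfolding Xi_def by blast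
  finally show ?thesis .
qed

lemma MB:
  assumes \<Omega>: "open \<Omega>" "compact (closure \<Omega>)" and dt: "dual_test lam p \<Omega> g"
  shows "\<exists>\<alpha>\<in>E. \<exists>D\<ge>0. \<forall>w\<in>XI. \<forall>\<epsilon>\<in>E. \<epsilon> \<le> \<alpha> \<longrightarrow> set_integrable lam \<Omega> (\<lambda>x. w (H \<epsilon> x) * g x) \<and>
      cmod (set_lebesgue_integral lam \<Omega> (\<lambda>x. w (H \<epsilon> x) * g x)) \<le> D * XN w"
proof -
  have \<Omega>s: "\<Omega> \<in> sets lam" using \<Omega>(1) lam_sets by simp
  obtain C where C: "C \<ge> 0" "\<And>f. f \<in> borel_measurable lam \<Longrightarrow> lp_integral lam p \<Omega> f < \<infinity> \<Longrightarrow>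
     set_integrable lam \<Omega> (\<lambda>x. f x * g x) \<and>
     cmod (set_lebesgue_integral lam \<Omega> (\<lambda>x. f x * g x)) \<le> C * enn2real (lp_integral lam p \<Omega> f) powr (1/p)"
    using HB2[OF p1 \<Omega>s dt] by blast
  obtain \<alpha>1 C2 where a1: "\<alpha>1 \<in> E" "C2 \<ge> 0" and L: "\<And>w \<epsilon>. w \<in> borel_measurable lam \<Longrightarrow> \<epsilon> \<in> E \<Longrightarrow> \<epsilon> \<le> \<alpha>1 \<Longrightarrow>
      lp_integral lam p (closure \<Omega>) (w \<circ> H \<epsilon>) \<le> ennreal C2 * SUPB w"
    using L2[OF \<Omega>(2)] by blast
  define \<alpha> where "\<alpha> = min \<alpha>1 e"
  have aE: "\<alpha> \<in> E" using a1(1) eE by (simp add: \<alpha>_def min_def)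
  define D where "D = C * C2 powr (1/p)"
  have "set_integrable lam \<Omega> (\<lambda>x. w (H \<epsilon> x) * g x) \<and>
      cmod (set_lebesgue_integral lam \<Omega> (\<lambda>x. w (H \<epsilon> x) * g x)) \<le> D * XN w"
    if w: "w \<in> XI" and eps: "\<epsilon> \<in> E" "\<epsilon> \<le> \<alpha>" for w \<epsilon>
  proof -
    have wm: "w \<in> borel_measurable lam" using w unfolding Xi_def Lp_loc_def by simp
    have fm: "(\<lambda>x. w (H \<epsilon> x)) \<in> borel_measurable lam" using comp_meas[OF wm eps(1)] .
    have "lp_integral lam p \<Omega> (\<lambda>x. w (H \<epsilon> x)) \<le> lp_integral lam p (closure \<Omega>) (w \<circ> H \<epsilon>)"
      using lp_mono_set[OF closure_subset, of \<Omega> "w \<circ> H \<epsilon>"] by (simp add: o_def)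
    also have "\<dots> \<le> ennreal C2 * SUPB w" using L[OF wm eps(1)] eps(2) by (simp add: \<alpha>_def)
    also have "\<dots> = ennreal (C2 * XN w powr p)" using XN_pow[OF w] a1(2) by (simp add: ennreal_mult)
    finally have lpb: "lp_integral lam p \<Omega> (\<lambda>x. w (H \<epsilon> x)) \<le> ennreal (C2 * XN w powr p)" .
    then have fin: "lp_integral lam p \<Omega> (\<lambda>x. w (H \<epsilon> x)) < \<infinity>" by (simp add: order.strict_trans1)
    have "enn2real (lp_integral lam p \<Omega> (\<lambda>x. w (H \<epsilon> x))) \<le> C2 * XN w powr p"
      using enn2real_mono[OF lpb] a1(2) by simp
    then have "enn2real (lp_integral lam p \<Omega> (\<lambda>x. w (H \<epsilon> x))) powr (1/p) \<le> (C2 * XN w powr p) powr (1/p)"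
      using p1 by (intro powr_mono2) auto
    also have "\<dots> = C2 powr (1/p) * XN w"
      using p1 a1(2) XN_nonneg[of w] by (simp add: powr_mult powr_powr)
    finally have b: "enn2real (lp_integral lam p \<Omega> (\<lambda>x. w (H \<epsilon> x))) powr (1/p) \<le> C2 powr (1/p) * XN w" .
    have "C * enn2real (lp_integral lam p \<Omega> (\<lambda>x. w (H \<epsilon> x))) powr (1/p) \<le> D * XN w"
      using mult_left_mono[OF b C(1)] by (simp add: D_def mult.assoc)
    then show ?thesis using C(2)[OF fm fin] by linarith
  qed
  moreover have "D \<ge> 0" using C(1) by (simp add: D_def)
  ultimately show ?thesis using aE by blast
qed

lemma PIconv:
  assumes v: "v \<in> PI" and \<Omega>: "open \<Omega>" "compact (closure \<Omega>)" and dt: "dual_test lam p \<Omega> g"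
  shows "((\<lambda>\<epsilon>. set_lebesgue_integral lam \<Omega> (\<lambda>x. v (H \<epsilon> x) * g x)) \<longlongrightarrow>
           mean_value E H lam v * set_lebesgue_integral lam \<Omega> g) (theta_filter E)"
proof -
  have \<Omega>s: "\<Omega> \<in> sets lam" using \<Omega>(1) lam_sets by simp
  obtain c where c: "weakstar_mean E H lam v c" using v by (auto simp: Pi_inf_def)
  obtain C where C: "\<And>f. f \<in> borel_measurable lam \<Longrightarrow> lp_integral lam p \<Omega> f < \<infinity> \<Longrightarrow>
     set_integrable lam \<Omega> (\<lambda>x. f x * g x)"
    using HB2[OF p1 \<Omega>s dt] by blast
  have "lp_integral lam p \<Omega> (\<lambda>x. 1) = emeasure lam \<Omega>"
    unfolding lp_integral_def using \<Omega>s by simp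
  also have "\<dots> \<le> emeasure lam (closure \<Omega>)"
    by (rule emeasure_mono[OF closure_subset]) (use Ksets[OF \<Omega>(2)] in simp)
  also have "\<dots> < \<infinity>" using lam_compact[OF \<Omega>(2)] .
  finally have fin1: "lp_integral lam p \<Omega> (\<lambda>x. 1) < \<infinity>" .
  have "set_integrable lam \<Omega> (\<lambda>x. (\<lambda>x. 1) x * g x)" by (rule C) (use fin1 in simp_all)
  then have hi: "integrable lam (\<lambda>x. indicator \<Omega> x *\<^sub>R g x)" unfolding set_integrable_def by simp
  have lim: "((\<lambda>\<epsilon>. \<integral>x. v (H \<epsilon> x) * (indicator \<Omega> x *\<^sub>R g x) \<partial>lam) \<longlongrightarrow> c * integral\<^sup>L lam (\<lambda>x. indicator \<Omega> x *\<^sub>R g x)) (theta_filter E)"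
    using c hi unfolding weakstar_mean_def by blast
  have eq: "(\<integral>x. v (H \<epsilon> x) * (indicator \<Omega> x *\<^sub>R g x) \<partial>lam) = set_lebesgue_integral lam \<Omega> (\<lambda>x. v (H \<epsilon> x) * g x)" for \<epsilon>
    unfolding set_lebesgue_integral_def by (intro Bochner_Integration.integral_cong) (auto simp: indicator_def)
  show ?thesis using lim unfolding eq mean_eq[OF c] set_lebesgue_integral_def[symmetric] .
qed

lemma GL:
  assumes \<Omega>: "open \<Omega>" "compact (closure \<Omega>)" and dt: "dual_test lam p \<Omega> g"
  shows "\<exists>D\<ge>0. \<forall>u\<in>FX. \<exists>l. ((\<lambda>\<epsilon>. set_lebesgue_integral lam \<Omega> (\<lambda>x. u (H \<epsilon> x) * g x)) \<longlongrightarrow> l) (theta_filter E) \<and>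
      (\<forall>v\<in>PI. cmod (l - mean_value E H lam v * set_lebesgue_integral lam \<Omega> g) \<le> D * XN (\<lambda>x. u x - v x))"
proof -
  obtain \<alpha> D where aE: "\<alpha> \<in> E" and D: "D \<ge> 0" and mb: "\<And>w \<epsilon>. w \<in> XI \<Longrightarrow> \<epsilon> \<in> E \<Longrightarrow> \<epsilon> \<le> \<alpha> \<Longrightarrow>
      set_integrable lam \<Omega> (\<lambda>x. w (H \<epsilon> x) * g x) \<and>
      cmod (set_lebesgue_integral lam \<Omega> (\<lambda>x. w (H \<epsilon> x) * g x)) \<le> D * XN w"
    using MB[OF \<Omega> dt] by blast
  define IG where "IG = set_lebesgue_integral lam \<Omega> g"
  define S where "S w \<epsilon> = set_lebesgue_integral lam \<Omega> (\<lambda>x. w (H \<epsilon> x) * g x)" for w \<epsilon>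
  have "\<exists>l. (S u \<longlongrightarrow> l) (theta_filter E) \<and> (\<forall>v\<in>PI. cmod (l - mean_value E H lam v * IG) \<le> D * XN (\<lambda>x. u x - v x))"
    if u: "u \<in> FX" for u
  proof (rule abstract_limit[OF theta_nontriv])
    have uX: "u \<in> XI" using u unfolding frakX_def by simp
    fix \<delta> :: real assume "\<delta> > 0"
    then have "\<delta> / (D + 1) > 0" using D by simp
    then obtain v where v: "v \<in> PI" "XN (\<lambda>x. u x - v x) < \<delta> / (D + 1)"
      using u unfolding frakX_def by blast
    then have "(D + 1) * XN (\<lambda>x. u x - v x) < \<delta>" using D by (simp add: field_simps)
    moreover have "D * XN (\<lambda>x. u x - v x) \<le> (D + 1) * XN (\<lambda>x. u x - v x)"
      using XN_nonneg by (simp add: distrib_right)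
    ultimately show "\<exists>v\<in>PI. D * XN (\<lambda>x. u x - v x) < \<delta>" using v(1) by (meson le_less_trans)
  next
    have uX: "u \<in> XI" using u unfolding frakX_def by simp
    fix v :: "'a \<Rightarrow> complex" and \<eta> :: real assume v: "v \<in> PI" and \<eta>: "\<eta> > 0"
    have vX: "v \<in> XI" using PI_Xi[OF v] .
    have dX: "(\<lambda>x. u x - v x) \<in> XI" using Xi_diff[OF uX vX] .
    have "eventually (\<lambda>\<epsilon>. dist (S v \<epsilon>) (mean_value E H lam v * IG) < \<eta>) (theta_filter E)"
      using PIconv[OF v \<Omega> dt] \<eta> unfolding S_def IG_def tendsto_iff by blast
    moreover have "eventually (\<lambda>\<epsilon>. \<epsilon> \<in> E \<and> \<epsilon> \<le> \<alpha>) (theta_filter E)" using eventually_theta_le[OF aE] .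
    ultimately show "eventually (\<lambda>\<epsilon>. cmod (S u \<epsilon> - mean_value E H lam v * IG) \<le> D * XN (\<lambda>x. u x - v x) + \<eta>) (theta_filter E)"
    proof eventually_elim
      case (elim \<epsilon>)
      have i1: "set_integrable lam \<Omega> (\<lambda>x. u (H \<epsilon> x) * g x)" using mb[OF uX] elim by blast
      have i2: "set_integrable lam \<Omega> (\<lambda>x. v (H \<epsilon> x) * g x)" using mb[OF vX] elim by blast
      have b: "cmod (S (\<lambda>x. u x - v x) \<epsilon>) \<le> D * XN (\<lambda>x. u x - v x)" using mb[OF dX] elim unfolding S_def by blast
      have "S (\<lambda>x. u x - v x) \<epsilon> = S u \<epsilon> - S v \<epsilon>"
        unfolding S_def using set_integral_diff(2)[OF i1 i2] by (simp add: left_diff_distrib)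
      then have "S u \<epsilon> - mean_value E H lam v * IG = S (\<lambda>x. u x - v x) \<epsilon> + (S v \<epsilon> - mean_value E H lam v * IG)"
        by simp
      then have "cmod (S u \<epsilon> - mean_value E H lam v * IG) \<le> cmod (S (\<lambda>x. u x - v x) \<epsilon>) + cmod (S v \<epsilon> - mean_value E H lam v * IG)"
        by (metis norm_triangle_ineq)
      then show ?case using b elim by (simp add: dist_norm)
    qed
  qed
  then show ?thesis using D unfolding S_def IG_def by blast
qed

end

context hset
begin

lemma XN_zero: "XN (\<lambda>x. 0) = 0"
proof -
  have ne: "{\<epsilon>\<in>E. \<epsilon> \<le> e} \<noteq> {}" using eE by auto
  show ?thesis unfolding Xi_norm_def lp_integral_def using p1 ne by (simp add: o_def)
qed

lemma PI_FX: assumes v: "v \<in> PI" shows "v \<in> FX"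
proof -
  have z: "XN (\<lambda>x. v x - v x) = 0" using XN_zero by simp
  have "\<forall>\<delta>>0. \<exists>w\<in>PI. XN (\<lambda>x. v x - w x) < \<delta>"
  proof (intro allI impI)
    fix \<delta> :: real assume "\<delta> > 0"
    show "\<exists>w\<in>PI. XN (\<lambda>x. v x - w x) < \<delta>" by (rule bexI[of _ v]) (use z \<open>\<delta> > 0\<close> v in simp_all)
  qed
  then show ?thesis unfolding frakX_def using PI_Xi[OF v] by blast
qed

lemma FX_diff: assumes u: "u \<in> FX" and v: "v \<in> PI" shows "(\<lambda>x. u x - v x) \<in> FX"
proof -
  have uX: "u \<in> XI" using u unfolding frakX_def by simp
  have "(\<lambda>x. u x - v x) \<in> XI" using Xi_diff[OF uX PI_Xi[OF v]] .
  moreover have "\<exists>w\<in>PI. XN (\<lambda>x. (u x - v x) - w x) < \<delta>" if "\<delta> > 0" for \<delta>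
  proof -
    obtain w where w: "w \<in> PI" "XN (\<lambda>x. u x - w x) < \<delta>" using u \<open>\<delta> > 0\<close> unfolding frakX_def by blast
    have w': "(\<lambda>x. w x - v x) \<in> PI" using PI_diff[OF w(1) v] by blast
    have "(\<lambda>x. (u x - v x) - (w x - v x)) = (\<lambda>x. u x - w x)" by (simp add: algebra_simps)
    then show ?thesis using w' w(2) by (intro bexI[of _ "\<lambda>x. w x - v x"]) simp_all
  qed
  ultimately show ?thesis unfolding frakX_def by blast
qed

lemma small:
  fixes x :: real
  assumes K: "K \<ge> 0" and u: "u \<in> FX" and b: "\<And>v. v \<in> PI \<Longrightarrow> x \<le> K * XN (\<lambda>y. u y - v y)"
  shows "x \<le> 0"
proof (rule field_le_epsilon)
  fix \<eta> :: real assume "\<eta> > 0"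
  then have "\<eta> / (K + 1) > 0" using K by simp
  then obtain v where v: "v \<in> PI" "XN (\<lambda>y. u y - v y) < \<eta> / (K + 1)" using u unfolding frakX_def by blast
  then have "(K + 1) * XN (\<lambda>y. u y - v y) < \<eta>" using K by (simp add: field_simps)
  moreover have "K * XN (\<lambda>y. u y - v y) \<le> (K + 1) * XN (\<lambda>y. u y - v y)" using XN_nonneg by (simp add: distrib_right)
  ultimately show "x \<le> 0 + \<eta>" using b[OF v(1)] by simp
qed

lemma dtB: "dual_test lam p B (\<lambda>x. 1)"
proof -
  have "lp_integral lam (p / (p - 1)) B (\<lambda>x. 1) = emeasure lam B"
    unfolding lp_integral_def using Bsets by simp
  then show ?thesis unfolding dual_test_def using Bfin by auto
qed

lemma main:
  "\<exists>M'. cont_lin_extension E e H lam p B M' \<and>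
           (\<forall>M''. cont_lin_extension E e H lam p B M'' \<longrightarrow>
              (\<forall>u\<in>frakX E e H lam p B. M'' u = M' u)) \<and>
           (\<forall>u\<in>frakX E e H lam p B. \<forall>\<Omega>. open \<Omega> \<and> compact (closure \<Omega>) \<longrightarrow>
              weak_Lp_conv lam p \<Omega> (\<lambda>\<epsilon> x. u (H \<epsilon> x)) (\<lambda>x. M' u) (theta_filter E))"
proof -
  define SB where "SB u \<epsilon> = set_lebesgue_integral lam B (\<lambda>x. u (H \<epsilon> x) * (1::complex))" for u :: "'a \<Rightarrow> complex" and \<epsilon>
  define Mp where "Mp u = Lim (theta_filter E) (SB u) / complex_of_real LB" for u
  obtain DB where DB: "DB \<ge> 0" and gl: "\<And>u. u \<in> FX \<Longrightarrow> \<exists>l. (SB u \<longlongrightarrow> l) (theta_filter E) \<and>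
      (\<forall>v\<in>PI. cmod (l - mean_value E H lam v * complex_of_real LB) \<le> DB * XN (\<lambda>x. u x - v x))"
    using GL[OF Bopen Bcl dtB] unfolding SB_def IB by (auto simp: fun_eq_iff)
  have LBc: "complex_of_real LB \<noteq> 0" using LB_pos by simp
  have F1: "(SB u \<longlongrightarrow> Mp u * LB) (theta_filter E) \<and> (\<forall>v\<in>PI. cmod (Mp u - mean_value E H lam v) \<le> (DB / LB) * XN (\<lambda>x. u x - v x))"
    if u: "u \<in> FX" for u
  proof -
    obtain l where l: "(SB u \<longlongrightarrow> l) (theta_filter E)"
      "\<And>v. v \<in> PI \<Longrightarrow> cmod (l - mean_value E H lam v * complex_of_real LB) \<le> DB * XN (\<lambda>x. u x - v x)"
      using gl[OF u] by blast
    have Ml: "Mp u = l / LB" unfolding Mp_def using tendsto_Lim[OF theta_nontriv l(1)] by simp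
    have "l = Mp u * LB" using Ml LBc by simp
    moreover have "cmod (Mp u - mean_value E H lam v) \<le> (DB / LB) * XN (\<lambda>x. u x - v x)" if v: "v \<in> PI" for v
    proof -
      have "Mp u - mean_value E H lam v = (l - mean_value E H lam v * complex_of_real LB) / complex_of_real LB"
        using Ml LBc by (simp add: field_simps)
      then have "cmod (Mp u - mean_value E H lam v) = cmod (l - mean_value E H lam v * complex_of_real LB) / LB"
        using LB_pos by (simp add: norm_divide)
      also have "\<dots> \<le> DB * XN (\<lambda>x. u x - v x) / LB" using l(2)[OF v] LB_pos by (simp add: divide_right_mono)
      finally show ?thesis by simp
    qed
    ultimately show ?thesis using l(1) by blast
  qed
  obtain \<alpha>B DB' where aB: "\<alpha>B \<in> E" and mbB: "\<And>w \<epsilon>. w \<in> XI \<Longrightarrow> \<epsilon> \<in> E \<Longrightarrow> \<epsilon> \<le> \<alpha>B \<Longrightarrow>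
      set_integrable lam B (\<lambda>x. w (H \<epsilon> x) * 1)"
    using MB[OF Bopen Bcl dtB] by blast
  have FXX: "u \<in> FX \<Longrightarrow> u \<in> XI" for u unfolding frakX_def by simp
  have cle: "cont_lin_extension E e H lam p B Mp"
    unfolding cont_lin_extension_def
  proof (intro conjI ballI allI)
    fix u v assume u: "u \<in> FX" and v: "v \<in> FX"
    have ev: "eventually (\<lambda>\<epsilon>. SB u \<epsilon> + SB v \<epsilon> = SB (\<lambda>x. u x + v x) \<epsilon>) (theta_filter E)"
      using eventually_theta_le[OF aB]
    proof eventually_elim
      case (elim \<epsilon>)
      then show ?case unfolding SB_def
        using set_integral_add(2)[OF mbB[OF FXX[OF u]] mbB[OF FXX[OF v]]] by simp
    qed
    have "(SB (\<lambda>x. u x + v x) \<longlongrightarrow> Mp u * LB + Mp v * LB) (theta_filter E)"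
      using tendsto_cong[OF ev] tendsto_add[OF F1[OF u, THEN conjunct1] F1[OF v, THEN conjunct1]] by simp
    then have "Lim (theta_filter E) (SB (\<lambda>x. u x + v x)) = (Mp u + Mp v) * LB"
      by (intro tendsto_Lim[OF theta_nontriv]) (simp add: distrib_right)
    then show "Mp (\<lambda>x. u x + v x) = Mp u + Mp v"
      unfolding Mp_def[of "\<lambda>x. u x + v x"] using LBc by simp
  next
    fix u c assume u: "u \<in> FX"
    have "SB (\<lambda>x. c * u x) = (\<lambda>\<epsilon>. c * SB u \<epsilon>)"
      unfolding SB_def by (simp add: mult.assoc)
    then have "(SB (\<lambda>x. c * u x) \<longlongrightarrow> c * (Mp u * LB)) (theta_filter E)"
      using tendsto_mult_left[OF F1[OF u, THEN conjunct1]] by simp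
    then have "Lim (theta_filter E) (SB (\<lambda>x. c * u x)) = c * (Mp u * LB)"
      by (rule tendsto_Lim[OF theta_nontriv])
    then show "Mp (\<lambda>x. c * u x) = c * Mp u"
      unfolding Mp_def[of "\<lambda>x. c * u x"] using LBc by simp
  next
    show "\<exists>C. \<forall>u\<in>FX. cmod (Mp u) \<le> C * XN u"
    proof (intro exI ballI)
      fix u assume u: "u \<in> FX"
      show "cmod (Mp u) \<le> DB / LB * XN u"
        using F1[OF u] PI_zero by auto
    qed
  next
    fix u assume u: "u \<in> PI"
    have "(SB u \<longlongrightarrow> mean_value E H lam u * LB) (theta_filter E)"
      using PIconv[OF u Bopen Bcl dtB] unfolding SB_def IB by simp
    then have "Lim (theta_filter E) (SB u) = mean_value E H lam u * LB"
      by (rule tendsto_Lim[OF theta_nontriv])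
    then show "Mp u = mean_value E H lam u"
      unfolding Mp_def using LBc by simp
  qed
  have uniq: "M'' u = Mp u" if M'': "cont_lin_extension E e H lam p B M''" and u: "u \<in> FX" for M'' u
  proof -
    obtain C where C: "\<And>w. w \<in> FX \<Longrightarrow> cmod (M'' w) \<le> C * XN w"
      using M'' unfolding cont_lin_extension_def by blast
    have add: "\<And>a b. a \<in> FX \<Longrightarrow> b \<in> FX \<Longrightarrow> M'' (\<lambda>x. a x + b x) = M'' a + M'' b"
      and ext: "\<And>w. w \<in> PI \<Longrightarrow> M'' w = mean_value E H lam w"
      using M'' unfolding cont_lin_extension_def by blast+
    have "cmod (M'' u - Mp u) \<le> 0"
    proof (rule small[OF _ u])
      show "0 \<le> \<bar>C\<bar> + DB / LB" using DB LB_pos by simp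
      fix v assume v: "v \<in> PI"
      define a where "a = (\<lambda>x. u x - v x)"
      have aF: "a \<in> FX" unfolding a_def using FX_diff[OF u v] .
      have "(\<lambda>x. a x + v x) = u" unfolding a_def by simp
      then have "M'' u = M'' a + mean_value E H lam v"
        using add[OF aF PI_FX[OF v]] ext[OF v] by simp
      then have "M'' u - Mp u = M'' a - (Mp u - mean_value E H lam v)" by simp
      then have "cmod (M'' u - Mp u) \<le> cmod (M'' a) + cmod (Mp u - mean_value E H lam v)"
        by (metis norm_triangle_ineq4)
      also have "\<dots> \<le> \<bar>C\<bar> * XN a + (DB / LB) * XN a"
      proof (rule add_mono)
        show "cmod (M'' a) \<le> \<bar>C\<bar> * XN a" using C[OF aF] XN_nonneg[of a]
          by (meson abs_ge_self mult_right_mono order_trans)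
        show "cmod (Mp u - mean_value E H lam v) \<le> DB / LB * XN a"
          using F1[OF u] v unfolding a_def by blast
      qed
      finally show "cmod (M'' u - Mp u) \<le> (\<bar>C\<bar> + DB / LB) * XN (\<lambda>y. u y - v y)"
        unfolding a_def by (simp add: distrib_right)
    qed
    then show ?thesis by simp
  qed
  have weak: "weak_Lp_conv lam p \<Omega> (\<lambda>\<epsilon> x. u (H \<epsilon> x)) (\<lambda>x. Mp u) (theta_filter E)"
    if u: "u \<in> FX" and \<Omega>: "open \<Omega>" "compact (closure \<Omega>)" for u \<Omega>
    unfolding weak_Lp_conv_def
  proof (intro conjI allI impI)
    have uX: "u \<in> XI" using FXX[OF u] .
    have um: "u \<in> borel_measurable lam" using uX unfolding Xi_def Lp_loc_def by simp
    show "eventually (\<lambda>\<epsilon>. (\<lambda>x. u (H \<epsilon> x)) \<in> borel_measurable lam \<and> lp_integral lam p \<Omega> (\<lambda>x. u (H \<epsilon> x)) < \<infinity>) (theta_filter E)"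
      using eventually_theta_le[OF eE]
    proof eventually_elim
      case (elim \<epsilon>)
      then show ?case using comp_meas[OF um] lp_fin[OF uX \<Omega>(2)] by blast
    qed
    fix g assume dt: "dual_test lam p \<Omega> g"
    define IG where "IG = set_lebesgue_integral lam \<Omega> g"
    obtain D where D: "D \<ge> 0" and gl2: "\<And>u. u \<in> FX \<Longrightarrow> \<exists>l. ((\<lambda>\<epsilon>. set_lebesgue_integral lam \<Omega> (\<lambda>x. u (H \<epsilon> x) * g x)) \<longlongrightarrow> l) (theta_filter E) \<and>
      (\<forall>v\<in>PI. cmod (l - mean_value E H lam v * IG) \<le> D * XN (\<lambda>x. u x - v x))"
      using GL[OF \<Omega> dt] unfolding IG_def by blast
    obtain l where l: "((\<lambda>\<epsilon>. set_lebesgue_integral lam \<Omega> (\<lambda>x. u (H \<epsilon> x) * g x)) \<longlongrightarrow> l) (theta_filter E)"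
      "\<And>v. v \<in> PI \<Longrightarrow> cmod (l - mean_value E H lam v * IG) \<le> D * XN (\<lambda>x. u x - v x)"
      using gl2[OF u] by blast
    have "cmod (l - Mp u * IG) \<le> 0"
    proof (rule small[OF _ u])
      show "0 \<le> D + cmod IG * (DB / LB)" using D DB LB_pos by simp
      fix v assume v: "v \<in> PI"
      have "l - Mp u * IG = (l - mean_value E H lam v * IG) - IG * (Mp u - mean_value E H lam v)"
        by (simp add: algebra_simps)
      then have "cmod (l - Mp u * IG) \<le> cmod (l - mean_value E H lam v * IG) + cmod IG * cmod (Mp u - mean_value E H lam v)"
        by (metis norm_mult norm_triangle_ineq4)
      also have "\<dots> \<le> D * XN (\<lambda>x. u x - v x) + cmod IG * ((DB / LB) * XN (\<lambda>x. u x - v x))"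
        using l(2)[OF v] F1[OF u] v by (intro add_mono mult_left_mono) auto
      finally show "cmod (l - Mp u * IG) \<le> (D + cmod IG * (DB / LB)) * XN (\<lambda>y. u y - v y)"
        by (simp add: algebra_simps)
    qed
    then have "l = Mp u * IG" by simp
    then show "((\<lambda>\<epsilon>. set_lebesgue_integral lam \<Omega> (\<lambda>x. u (H \<epsilon> x) * g x)) \<longlongrightarrow>
              set_lebesgue_integral lam \<Omega> (\<lambda>x. Mp u * g x)) (theta_filter E)"
      using l(1) unfolding IG_def by simp
  qed
  show ?thesis using cle uniq weak by blast
qed

end

theorem proposition4p1:
  fixes E :: "real set" and gmul :: "real \<Rightarrow> real \<Rightarrow> real" and e :: real
    and iv :: "real \<Rightarrow> real"
    and H :: "real \<Rightarrow> 'a::{t2_space, first_countable_topology} \<Rightarrow> 'a"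
    and lam :: "'a measure" and p :: real and B :: "'a set"
  assumes "homogenizer E gmul e iv H lam"
    and "1 \<le> p"
    and "open B" and "elementary E e iv H B"
  shows "\<exists>M'. cont_lin_extension E e H lam p B M' \<and>
           (\<forall>M''. cont_lin_extension E e H lam p B M'' \<longrightarrow>
              (\<forall>u\<in>frakX E e H lam p B. M'' u = M' u)) \<and>
           (\<forall>u\<in>frakX E e H lam p B. \<forall>\<Omega>. open \<Omega> \<and> compact (closure \<Omega>) \<longrightarrow>
              weak_Lp_conv lam p \<Omega> (\<lambda>\<epsilon> x. u (H \<epsilon> x)) (\<lambda>x. M' u) (theta_filter E))"
proof -
  interpret hset E gmul e iv H lam p B using assms by unfold_locales
  show ?thesis by (rule main)
qed


end
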